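(* Let $n\ge 1$ and let $\beta$ be a braid on $n$ strands with exponent sum $w$, and let $\Delta=\Delta_n$ be the Garside positive half-twist braid on $n$ strands, so that $\beta\Delta^2$ is a braid on $n$ strands with exponent sum $w+n(n-1)$. Then the lower Morton--Franks-Williams estimate is sharp for $\beta$ (i.e. the lowest power of $v$ occurring with non-zero coefficient in $P_{\widehat\beta}(v,z)$ is exactly $v^{w-n+1}$) if and only if the upper Morton--Franks-Williams estimate is sharp for $\beta\Delta^2$ (i.e. the highest power of $v$ occurring with non-zero coefficient in $P_{\widehat{\beta\Delta^2}}(v,z)$ is exactly $v^{w+n^2-1}$). Moreover, if this is the case, then the left column of $P_{\widehat\beta}$ equals $(-1)^{n-1}$ times the right column of $P_{\widehat{\beta\Delta^2}}$; that is, the coefficient (a Laurent polynomial in $z$) of $v^{w-n+1}$ in $P_{\widehat\beta}$ equals $(-1)^{n-1}$ times the coefficient of $v^{w+n^2-1}$ in $P_{\widehat{\beta\Delta^2}}$.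
   Context: For a braid $\gamma$, $\widehat\gamma$ denotes its usual closure, oriented by orienting the strands of $\gamma$ in the braid direction. The Homfly polynomial $P_L(v,z)\in\mathbb{Z}[v^{\pm1},z^{\pm1}]$ of an oriented link $L$ is the isotopy invariant with $P=1$ on the unknot and skein relation $v^{-1}P_{L_+}-vP_{L_-}=zP_{L_0}$ (with $L_+,L_-,L_0$ differing at one crossing which is positive, negative, resp. smoothed). Equivalently $P_D=v^{\mathrm{writhe}(D)}H_D$, where $H$ is the framed Homfly polynomial (regular isotopy invariant with $H_{L_+}-H_{L_-}=zH_{L_0}$, a positive kink multiplying $H$ by $v$, a negative kink by $v^{-1}$, and $H=1$ on the crossingless unknot diagram). The Morton--Franks-Williams inequalities state that for a braid on $n$ strands with exponent sum $w$, every power of $v$ occurring in the Homfly polynomial of its closure lies between $v^{w-n+1}$ (lower estimate) and $v^{w+n-1}$ (upper estimate). The "left column" (resp. "right column") of a Homfly polynomial is the coefficient of its lowest (resp. highest) power of $v$, viewed as a Laurent polynomial in $z$. *)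

theory Defs
  imports Main "HOL-Library.Poly_Mapping" "HOL-Library.Product_Plus"
begin

text \<open>Laurent polynomials in two variables v, z with integer coefficients:
  a finitely supported map (a,b) \<mapsto> coefficient of v^a z^b; multiplication is
  convolution (the ring structure of poly_mapping).\<close>
type_synonym lpoly = "(int \<times> int) \<Rightarrow>\<^sub>0 int"

definition vz :: "int \<Rightarrow> int \<Rightarrow> lpoly" where
  "vz a b = Poly_Mapping.single (a, b) 1"

text \<open>Braid words on n strands: a nonzero integer i with |i| < n stands for
  sigma_|i| if i > 0 and sigma_|i|^(-1) if i < 0.\<close>
definition braid_word :: "nat \<Rightarrow> int list \<Rightarrow> bool" where
  "braid_word n w \<longleftrightarrow> (\<forall>g\<in>set w. g \<noteq> 0 \<and> \<bar>g\<bar> < int n)"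

definition exp_sum :: "int list \<Rightarrow> int" where
  "exp_sum w = (\<Sum>g\<leftarrow>w. sgn g)"

text \<open>Garside half twist Delta_n = (s_1 ... s_{n-1})(s_1 ... s_{n-2}) ... (s_1).\<close>
definition half_twist :: "nat \<Rightarrow> int list" where
  "half_twist n = concat (map (\<lambda>k. map int [1..<n - k]) [0..<n])"

definition full_twist :: "nat \<Rightarrow> int list" where
  "full_twist n = half_twist n @ half_twist n"

text \<open>P is the Homfly polynomial of braid closures: P n w = P of the closure
  of the braid word w on n strands.  By Markov's theorem, isotopy invariance of
  the closure is exactly invariance under braid relations, conjugation and
  (positive/negative) stabilisation; together with the skein relation
  v^{-1} P_+ - v P_- = z P_0 (a crossing sigma_i of the braid is a positive crossing
  of the oriented closure) and normalisation on the unknot this determines P.\<close>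
definition homfly_braid :: "(nat \<Rightarrow> int list \<Rightarrow> lpoly) \<Rightarrow> bool" where
  "homfly_braid P \<longleftrightarrow>
     P 1 [] = 1 \<and>
     \<comment> \<open>free cancellation\<close>
     (\<forall>n u w i. braid_word n (u @ w) \<and> i \<noteq> 0 \<and> \<bar>i\<bar> < int n \<longrightarrow>
        P n (u @ [i, -i] @ w) = P n (u @ w)) \<and>
     \<comment> \<open>far commutativity\<close>
     (\<forall>n u w i j. braid_word n (u @ [i, j] @ w) \<and> \<bar>\<bar>i\<bar> - \<bar>j\<bar>\<bar> \<ge> 2 \<longrightarrow>
        P n (u @ [i, j] @ w) = P n (u @ [j, i] @ w)) \<and>
     \<comment> \<open>braid relation\<close>
     (\<forall>n u w i. braid_word n (u @ w) \<and> 0 < i \<and> i + 1 < int n \<longrightarrow>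
        P n (u @ [i, i + 1, i] @ w) = P n (u @ [i + 1, i, i + 1] @ w)) \<and>
     \<comment> \<open>conjugation (Markov move I)\<close>
     (\<forall>n g w. braid_word n (g # w) \<longrightarrow> P n (g # w) = P n (w @ [g])) \<and>
     \<comment> \<open>stabilisation (Markov move II)\<close>
     (\<forall>n w. n \<ge> 1 \<and> braid_word n w \<longrightarrow>
        P (n + 1) (w @ [int n]) = P n w \<and> P (n + 1) (w @ [- int n]) = P n w) \<and>
     \<comment> \<open>skein relation\<close>
     (\<forall>n u w i. braid_word n (u @ w) \<and> 0 < i \<and> i < int n \<longrightarrow>
        vz (-1) 0 * P n (u @ [i] @ w) - vz 1 0 * P n (u @ [-i] @ w)
          = vz 0 1 * P n (u @ w))"

definition vdeg_min :: "lpoly \<Rightarrow> int" where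
  "vdeg_min p = Min (fst ` Poly_Mapping.keys p)"

definition vdeg_max :: "lpoly \<Rightarrow> int" where
  "vdeg_max p = Max (fst ` Poly_Mapping.keys p)"

definition vcoeff :: "lpoly \<Rightarrow> int \<Rightarrow> int \<Rightarrow> int" where
  "vcoeff p a = (\<lambda>b. Poly_Mapping.lookup p (a, b))"

end

theory Submission
  imports Defs Complex_Main
begin



section \<open>Laurent polynomial basics\<close>

lemma lookup_single_mult:
  "Poly_Mapping.lookup (Poly_Mapping.single s c * (p::lpoly)) x = c * Poly_Mapping.lookup p (x - s)"
proof -
  have "Poly_Mapping.lookup (Poly_Mapping.single s c * p) x
     = Sum_any (\<lambda>l. (c when s = l) * Sum_any (\<lambda>q. Poly_Mapping.lookup p q when x = l + q))"
    by (simp add: lookup_mult lookup_single)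
  also have "\<dots> = c * Sum_any (\<lambda>q. Poly_Mapping.lookup p q when x = s + q)"
    by (simp add: when_mult)
  also have "Sum_any (\<lambda>q. Poly_Mapping.lookup p q when x = s + q) = Poly_Mapping.lookup p (x - s)"
  proof -
    have "(\<lambda>q. Poly_Mapping.lookup p q when x = s + q) = (\<lambda>q. Poly_Mapping.lookup p q when q = x - s)"
      by (auto simp: fun_eq_iff when_def algebra_simps)
    then show ?thesis by (simp only: Sum_any_when_equal)
  qed
  finally show ?thesis .
qed

lemma vz_mult: "vz a b * vz c d = vz (a + c) (b + d)"
  by (simp add: vz_def mult_single)

lemma vz_00: "vz 0 0 = 1"
proof -
  have "(0::int, 0::int) = 0" by (simp add: zero_prod_def)
  then show ?thesis by (simp add: vz_def)
qed

lemma lookup_vz_mult: "Poly_Mapping.lookup (vz a b * p) (x, y) = Poly_Mapping.lookup p (x - a, y - b)"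
  by (simp add: vz_def lookup_single_mult)

lemma of_int_lpoly: "(of_int k :: lpoly) = Poly_Mapping.single 0 k"
proof -
  have "Poly_Mapping.single 0 (of_int k :: int) = (of_int k :: lpoly)" by (rule single_of_int)
  then show ?thesis by simp
qed

lemma lookup_of_int_mult: "Poly_Mapping.lookup (of_int k * (p::lpoly)) x = k * Poly_Mapping.lookup p x"
  by (simp only: of_int_lpoly lookup_single_mult) simp

lemma lookup_coef: "Poly_Mapping.lookup (of_int k * vz 0 j * (p::lpoly)) (x, y) = k * Poly_Mapping.lookup p (x, y - j)"
  by (simp add: mult.assoc lookup_of_int_mult lookup_vz_mult)

section \<open>Evaluation\<close>

definition wgt :: "int \<times> int \<Rightarrow> real" where
  "wgt x = power_int 2 (fst x) * power_int (-3/2) (snd x)"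

definition ev :: "lpoly \<Rightarrow> real" where
  "ev p = (\<Sum>x\<in>Poly_Mapping.keys p. of_int (Poly_Mapping.lookup p x) * wgt x)"

lemma ev_superset:
  assumes "finite S" "Poly_Mapping.keys p \<subseteq> S"
  shows "ev p = (\<Sum>x\<in>S. of_int (Poly_Mapping.lookup p x) * wgt x)"
  unfolding ev_def
  by (rule sum.mono_neutral_left) (use assms in \<open>auto simp: in_keys_iff\<close>)

lemma ev_add: "ev (p + q) = ev p + ev q"
proof -
  let ?S = "Poly_Mapping.keys p \<union> Poly_Mapping.keys q"
  have "ev (p + q) = (\<Sum>x\<in>?S. of_int (Poly_Mapping.lookup (p+q) x) * wgt x)"
    by (rule ev_superset) (auto simp: keys_add)
  also have "\<dots> = (\<Sum>x\<in>?S. of_int (Poly_Mapping.lookup p x) * wgt x) + (\<Sum>x\<in>?S. of_int (Poly_Mapping.lookup q x) * wgt x)"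
    by (simp add: lookup_add sum.distrib algebra_simps)
  also have "\<dots> = ev p + ev q"
    by (simp add: ev_superset[symmetric])
  finally show ?thesis .
qed

lemma ev_uminus: "ev (- p) = - ev p"
  by (simp add: ev_def sum_negf)

lemma ev_diff: "ev (p - q) = ev p - ev q"
  using ev_add[of p "-q"] by (simp add: ev_uminus)

lemma wgt_add: "wgt (s + y) = wgt s * wgt y"
  by (simp add: wgt_def power_int_add split: prod.splits)

lemma ev_single_mult: "ev (Poly_Mapping.single s c * p) = of_int c * wgt s * ev p"
proof -
  have fin: "finite ((\<lambda>y. s + y) ` Poly_Mapping.keys p)" by simp
  have sub: "Poly_Mapping.keys (Poly_Mapping.single s c * p) \<subseteq> (\<lambda>y. s + y) ` Poly_Mapping.keys p"
  proof
    fix x assume "x \<in> Poly_Mapping.keys (Poly_Mapping.single s c * p)"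
    then have "Poly_Mapping.lookup p (x - s) \<noteq> 0"
      by (auto simp: in_keys_iff lookup_single_mult)
    then show "x \<in> (\<lambda>y. s + y) ` Poly_Mapping.keys p"
      by (intro image_eqI[of _ _ "x - s"]) (auto simp: in_keys_iff)
  qed
  have "ev (Poly_Mapping.single s c * p) = (\<Sum>x\<in>(\<lambda>y. s + y) ` Poly_Mapping.keys p. of_int (c * Poly_Mapping.lookup p (x - s)) * wgt x)"
    by (subst ev_superset[OF fin sub]) (simp add: lookup_single_mult)
  also have "\<dots> = (\<Sum>y\<in>Poly_Mapping.keys p. of_int (c * Poly_Mapping.lookup p y) * wgt (s + y))"
    by (subst sum.reindex) (auto simp: inj_on_def)
  also have "\<dots> = of_int c * wgt s * ev p"
    by (simp add: ev_def sum_distrib_left wgt_add algebra_simps)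
  finally show ?thesis .
qed

lemma ev_vz_mult: "ev (vz a b * p) = power_int 2 a * power_int (-3/2) b * ev p"
  by (simp add: vz_def ev_single_mult wgt_def)

lemma ev_of_int_mult: "ev (of_int k * p) = of_int k * ev p"
  by (simp only: of_int_lpoly ev_single_mult) (simp add: wgt_def)

lemma ev_one: "ev 1 = 1"
  by (simp add: ev_def wgt_def)

lemma ev_zero: "ev 0 = 0"
  by (simp add: ev_def)

section \<open>Braid words\<close>

lemma bw_append[simp]: "braid_word n (a @ b) = (braid_word n a \<and> braid_word n b)"
  by (auto simp: braid_word_def)
lemma bw_Cons[simp]: "braid_word n (g # w) = (g \<noteq> 0 \<and> \<bar>g\<bar> < int n \<and> braid_word n w)"
  by (auto simp: braid_word_def)
lemma bw_Nil[simp]: "braid_word n []"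
  by (auto simp: braid_word_def)
lemma bw_mono: "braid_word n w \<Longrightarrow> n \<le> m \<Longrightarrow> braid_word m w"
  by (force simp: braid_word_def)
lemma es_append[simp]: "exp_sum (a @ b) = exp_sum a + exp_sum b"
  by (simp add: exp_sum_def)
lemma es_Cons[simp]: "exp_sum (g # w) = sgn g + exp_sum w"
  by (simp add: exp_sum_def)
lemma es_Nil[simp]: "exp_sum [] = 0"
  by (simp add: exp_sum_def)

locale hb =
  fixes P :: "nat \<Rightarrow> int list \<Rightarrow> lpoly"
  assumes hbP: "homfly_braid P"
begin

lemma ax_one: "P 1 [] = 1"
  using hbP[unfolded homfly_braid_def, THEN conjunct1] .
lemma ax_cancel: "braid_word n (u @ w) \<Longrightarrow> i \<noteq> 0 \<Longrightarrow> \<bar>i\<bar> < int n \<Longrightarrow> P n (u @ [i, -i] @ w) = P n (u @ w)"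
  using hbP[unfolded homfly_braid_def, THEN conjunct2, THEN conjunct1] by blast
lemma ax_comm: "braid_word n (u @ [i, j] @ w) \<Longrightarrow> \<bar>\<bar>i\<bar> - \<bar>j\<bar>\<bar> \<ge> 2 \<Longrightarrow> P n (u @ [i, j] @ w) = P n (u @ [j, i] @ w)"
  using hbP[unfolded homfly_braid_def, THEN conjunct2, THEN conjunct2, THEN conjunct1] by blast
lemma ax_braid: "braid_word n (u @ w) \<Longrightarrow> 0 < i \<Longrightarrow> i + 1 < int n \<Longrightarrow>
        P n (u @ [i, i + 1, i] @ w) = P n (u @ [i + 1, i, i + 1] @ w)"
  using hbP[unfolded homfly_braid_def, THEN conjunct2, THEN conjunct2, THEN conjunct2, THEN conjunct1] by blast
lemma ax_conj: "braid_word n (g # w) \<Longrightarrow> P n (g # w) = P n (w @ [g])"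
  using hbP[unfolded homfly_braid_def, THEN conjunct2, THEN conjunct2, THEN conjunct2, THEN conjunct2, THEN conjunct1] by blast
lemma ax_stab: "n \<ge> 1 \<Longrightarrow> braid_word n w \<Longrightarrow> P (n + 1) (w @ [int n]) = P n w"
  using hbP[unfolded homfly_braid_def, THEN conjunct2, THEN conjunct2, THEN conjunct2, THEN conjunct2, THEN conjunct2, THEN conjunct1] by blast
lemma ax_stab': "n \<ge> 1 \<Longrightarrow> braid_word n w \<Longrightarrow> P (n + 1) (w @ [- int n]) = P n w"
  using hbP[unfolded homfly_braid_def, THEN conjunct2, THEN conjunct2, THEN conjunct2, THEN conjunct2, THEN conjunct2, THEN conjunct1] by blast
lemma ax_skein: "braid_word n (u @ w) \<Longrightarrow> 0 < i \<Longrightarrow> i < int n \<Longrightarrow>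
        vz (-1) 0 * P n (u @ [i] @ w) - vz 1 0 * P n (u @ [-i] @ w) = vz 0 1 * P n (u @ w)"
  using hbP[unfolded homfly_braid_def, THEN conjunct2, THEN conjunct2, THEN conjunct2, THEN conjunct2, THEN conjunct2, THEN conjunct2] by blast

definition HH :: "nat \<Rightarrow> int list \<Rightarrow> lpoly" where
  "HH m w = vz (- exp_sum w) 0 * P m w"

lemma HH_one: "HH 1 [] = 1"
  using ax_one by (simp add: HH_def vz_00)

lemma P_rot: "braid_word m (u @ w) \<Longrightarrow> P m (u @ w) = P m (w @ u)"
proof (induction u arbitrary: w)
  case Nil then show ?case by simp
next
  case (Cons g u)
  have "P m ((g # u) @ w) = P m ((u @ w) @ [g])"
    using Cons.prems by (simp add: ax_conj)
  also have "\<dots> = P m (u @ (w @ [g]))" by simp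
  also have "\<dots> = P m ((w @ [g]) @ u)"
    by (rule Cons.IH) (use Cons.prems in auto)
  finally show ?case by simp
qed

lemma HH_rot: "braid_word m (u @ w) \<Longrightarrow> HH m (u @ w) = HH m (w @ u)"
  by (simp add: HH_def P_rot add.commute)

lemma HH_stab:
  assumes "n \<ge> 1" "braid_word n a" "braid_word n b"
  shows "HH (Suc n) (a @ [int n] @ b) = vz (-1) 0 * HH n (a @ b)"
proof -
  have ab: "braid_word (Suc n) a" "braid_word (Suc n) b" using assms bw_mono[of n _ "Suc n"] by auto
  have "P (Suc n) (a @ [int n] @ b) = P (Suc n) ((b @ a) @ [int n])"
    using P_rot[of "Suc n" "a @ [int n]" b] assms ab by auto
  also have "\<dots> = P n (b @ a)" using ax_stab[of n "b @ a"] assms by simp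
  also have "\<dots> = P n (a @ b)" using P_rot[of n b a] assms by simp
  finally have *: "P (Suc n) (a @ [int n] @ b) = P n (a @ b)" .
  have s: "sgn (int n) = 1" using assms by simp
  have e: "exp_sum (a @ [int n] @ b) = 1 + exp_sum (a @ b)" using s by simp
  have "HH (Suc n) (a @ [int n] @ b) = vz (-(1 + exp_sum (a @ b))) 0 * P n (a @ b)"
    unfolding HH_def e * ..
  also have "\<dots> = vz (-1) 0 * HH n (a @ b)"
    unfolding HH_def mult.assoc[symmetric] vz_mult by simp
  finally show ?thesis .
qed

lemma HH_stab':
  assumes "n \<ge> 1" "braid_word n a" "braid_word n b"
  shows "HH (Suc n) (a @ [- int n] @ b) = vz 1 0 * HH n (a @ b)"
proof -
  have ab: "braid_word (Suc n) a" "braid_word (Suc n) b" using assms bw_mono[of n _ "Suc n"] by auto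
  have "P (Suc n) (a @ [- int n] @ b) = P (Suc n) ((b @ a) @ [- int n])"
    using P_rot[of "Suc n" "a @ [- int n]" b] assms ab by auto
  also have "\<dots> = P n (b @ a)" using ax_stab'[of n "b @ a"] assms by simp
  also have "\<dots> = P n (a @ b)" using P_rot[of n b a] assms by simp
  finally have *: "P (Suc n) (a @ [- int n] @ b) = P n (a @ b)" .
  have s: "sgn (- int n) = -1" using assms by simp
  have e: "exp_sum (a @ [- int n] @ b) = -1 + exp_sum (a @ b)" using s by simp
  have "HH (Suc n) (a @ [- int n] @ b) = vz (-(-1 + exp_sum (a @ b))) 0 * P n (a @ b)"
    unfolding HH_def e * ..
  also have "\<dots> = vz 1 0 * HH n (a @ b)"
    unfolding HH_def mult.assoc[symmetric] vz_mult by (simp add: algebra_simps)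
  finally show ?thesis .
qed

lemma HH_down:
  assumes "n \<ge> 1" "braid_word n a"
  shows "HH (Suc n) a = (vz (-1) (-1) - vz 1 (-1)) * HH n a"
proof -
  have sk: "vz (-1) 0 * P (Suc n) (a @ [int n] @ []) - vz 1 0 * P (Suc n) (a @ [- int n] @ []) = vz 0 1 * P (Suc n) (a @ [])"
    using ax_skein[of "Suc n" a "[]" "int n"] assms bw_mono[of n a "Suc n"] by auto
  have "P (Suc n) (a @ [int n]) = P n a" using ax_stab[of n a] assms by simp
  moreover have "P (Suc n) (a @ [- int n]) = P n a" using ax_stab'[of n a] assms by simp
  ultimately have "vz (-1) 0 * P n a - vz 1 0 * P n a = vz 0 1 * P (Suc n) a"
    using sk by simp
  then have "(vz (-1) 0 - vz 1 0) * P n a = vz 0 1 * P (Suc n) a"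
    by (simp only: left_diff_distrib)
  then have "vz 0 (-1) * ((vz (-1) 0 - vz 1 0) * P n a) = vz 0 (-1) * (vz 0 1 * P (Suc n) a)" by simp
  moreover have "vz 0 (-1) * (vz 0 1 * P (Suc n) a) = P (Suc n) a"
    by (simp only: mult.assoc[symmetric] vz_mult) (simp add: vz_00)
  moreover have "vz 0 (-1) * ((vz (-1) 0 - vz 1 0) * P n a) = (vz (-1) (-1) - vz 1 (-1)) * P n a"
    by (simp only: mult.assoc[symmetric] right_diff_distrib vz_mult) simp
  ultimately have "P (Suc n) a = (vz (-1) (-1) - vz 1 (-1)) * P n a" by simp
  then show ?thesis
    by (simp add: HH_def mult.left_commute)
qed

lemma HH_skein:
  assumes "braid_word m (u @ v)" "0 < i" "i < int m"
  shows "HH m (u @ [i] @ v) = HH m (u @ [-i] @ v) + vz 0 1 * HH m (u @ v)"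
proof -
  let ?E = "exp_sum (u @ v)"
  have sk: "vz (-1) 0 * P m (u @ [i] @ v) - vz 1 0 * P m (u @ [-i] @ v) = vz 0 1 * P m (u @ v)"
    using ax_skein assms by blast
  have si: "sgn i = 1" "sgn (-i) = -1" using assms by auto
  have A: "HH m (u @ [i] @ v) = vz (- ?E) 0 * (vz (-1) 0 * P m (u @ [i] @ v))"
    unfolding HH_def mult.assoc[symmetric] vz_mult
    by (intro arg_cong2[where f="(*)"] arg_cong2[where f=vz]) (simp_all add: si)
  have B: "HH m (u @ [-i] @ v) = vz (- ?E) 0 * (vz 1 0 * P m (u @ [-i] @ v))"
    unfolding HH_def mult.assoc[symmetric] vz_mult
    by (intro arg_cong2[where f="(*)"] arg_cong2[where f=vz]) (simp_all add: si)
  have C: "vz 0 1 * HH m (u @ v) = vz (- ?E) 0 * (vz 0 1 * P m (u @ v))"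
    unfolding HH_def mult.assoc[symmetric] vz_mult by simp
  have "vz (- ?E) 0 * (vz (-1) 0 * P m (u @ [i] @ v)) - vz (- ?E) 0 * (vz 1 0 * P m (u @ [-i] @ v))
        = vz (- ?E) 0 * (vz 0 1 * P m (u @ v))"
    using sk by (simp only: right_diff_distrib[symmetric])
  then show ?thesis unfolding A B C by (metis diff_eq_eq add.commute)
qed

lemma HH_cancel:
  assumes "braid_word m (u @ v)" "i \<noteq> 0" "\<bar>i\<bar> < int m"
  shows "HH m (u @ [i, -i] @ v) = HH m (u @ v)"
  using ax_cancel[OF assms] by (simp add: HH_def)

lemma HH_comm:
  assumes "braid_word m (u @ [i, j] @ v)" "\<bar>\<bar>i\<bar> - \<bar>j\<bar>\<bar> \<ge> 2"
  shows "HH m (u @ [i, j] @ v) = HH m (u @ [j, i] @ v)"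
  using ax_comm[OF assms] by (simp add: HH_def algebra_simps)

lemma HH_braid:
  assumes "braid_word m (u @ v)" "0 < i" "i + 1 < int m"
  shows "HH m (u @ [i, i + 1, i] @ v) = HH m (u @ [i + 1, i, i + 1] @ v)"
proof -
  have "sgn i = 1" "sgn (i + 1) = 1" using assms by auto
  then show ?thesis using ax_braid[OF assms] by (simp add: HH_def algebra_simps)
qed

end

section \<open>Formal combinations\<close>

type_synonym comb = "(int \<times> int \<times> int list) list"

definition lsum :: "(int list \<Rightarrow> lpoly) \<Rightarrow> comb \<Rightarrow> lpoly" where
  "lsum F X = (\<Sum>(k, j, w)\<leftarrow>X. of_int k * vz 0 j * F w)"
definition wsum :: "(int list \<Rightarrow> real) \<Rightarrow> comb \<Rightarrow> real" where
  "wsum G X = (\<Sum>(k, j, w)\<leftarrow>X. of_int k * power_int (-3/2) j * G w)"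
definition ctx :: "int list \<Rightarrow> comb \<Rightarrow> int list \<Rightarrow> comb" where
  "ctx u X v = map (\<lambda>(k, j, w). (k, j, u @ w @ v)) X"
definition bwc :: "nat \<Rightarrow> comb \<Rightarrow> bool" where
  "bwc n X = (\<forall>(k, j, w)\<in>set X. braid_word n w)"
definition sc :: "int \<Rightarrow> int \<Rightarrow> comb \<Rightarrow> comb" where
  "sc k j X = map (\<lambda>(k', j', w). (k * k', j + j', w)) X"

lemma lsum_Nil[simp]: "lsum F [] = 0" by (simp add: lsum_def)
lemma lsum_Cons[simp]: "lsum F ((k, j, w) # X) = of_int k * vz 0 j * F w + lsum F X"
  by (simp add: lsum_def)
lemma lsum_append[simp]: "lsum F (X @ Y) = lsum F X + lsum F Y" by (simp add: lsum_def)
lemma wsum_Nil[simp]: "wsum F [] = 0" by (simp add: wsum_def)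
lemma wsum_Cons[simp]: "wsum F ((k, j, w) # X) = of_int k * power_int (-3/2) j * F w + wsum F X"
  by (simp add: wsum_def)
lemma wsum_append[simp]: "wsum F (X @ Y) = wsum F X + wsum F Y" by (simp add: wsum_def)
lemma ctx_Nil[simp]: "ctx u [] v = []" by (simp add: ctx_def)
lemma ctx_Cons[simp]: "ctx u ((k, j, w) # X) v = (k, j, u @ w @ v) # ctx u X v" by (simp add: ctx_def)
lemma ctx_append[simp]: "ctx u (X @ Y) v = ctx u X v @ ctx u Y v" by (simp add: ctx_def)
lemma ctx_ctx: "ctx u (ctx u' X v') v = ctx (u @ u') X (v' @ v)" by (induction X) (auto simp: ctx_def)
lemma ctx_empty[simp]: "ctx [] X [] = X" by (induction X) auto
lemma sc_Nil[simp]: "sc k j [] = []" by (simp add: sc_def)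
lemma sc_Cons[simp]: "sc k j ((k', j', w) # X) = (k * k', j + j', w) # sc k j X" by (simp add: sc_def)
lemma sc_append[simp]: "sc k j (X @ Y) = sc k j X @ sc k j Y" by (simp add: sc_def)
lemma bwc_Nil[simp]: "bwc n []" by (simp add: bwc_def)
lemma bwc_Cons[simp]: "bwc n ((k, j, w) # X) = (braid_word n w \<and> bwc n X)" by (simp add: bwc_def)
lemma bwc_append[simp]: "bwc n (X @ Y) = (bwc n X \<and> bwc n Y)" by (simp add: bwc_def ball_Un)

lemma lsum_ctx: "lsum F (ctx u X v) = lsum (\<lambda>w. F (u @ w @ v)) X"
  by (induction X) auto
lemma wsum_ctx: "wsum F (ctx u X v) = wsum (\<lambda>w. F (u @ w @ v)) X"
  by (induction X) auto
lemma lsum_sc: "lsum F (sc k j X) = of_int k * vz 0 j * lsum F X"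
proof (induction X)
  case Nil then show ?case by simp
next
  case (Cons x X)
  obtain k' j' w where x: "x = (k', j', w)" by (cases x) auto
  have "of_int (k * k') * vz 0 (j + j') * F w = of_int k * vz 0 j * (of_int k' * vz 0 j' * F w)"
  proof -
    have "vz 0 (j + j') = vz 0 j * vz 0 j'" by (simp add: vz_mult)
    then show ?thesis by (simp add: ac_simps)
  qed
  then show ?case using Cons by (simp add: x distrib_left)
qed
lemma wsum_sc: "wsum F (sc k j X) = of_int k * power_int (-3/2) j * wsum F X"
proof (induction X)
  case Nil then show ?case by simp
next
  case (Cons x X)
  obtain k' j' w where x: "x = (k', j', w)" by (cases x) auto
  have "of_int (k * k') * power_int (-3/2::real) (j + j') * F w = of_int k * power_int (-3/2) j * (of_int k' * power_int (-3/2) j' * F w)"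
    by (simp add: power_int_add ac_simps)
  then show ?case using Cons by (simp add: x distrib_left)
qed
lemma bwc_ctx: "bwc n (ctx u X v) = (bwc n X \<or> X = []) \<or> True \<Longrightarrow> braid_word n u \<Longrightarrow> braid_word n v \<Longrightarrow> bwc n X \<Longrightarrow> bwc n (ctx u X v)"
  by (induction X) auto
lemma bwc_sc[simp]: "bwc n (sc k j X) = bwc n X"
  by (induction X) auto
lemma bwc_mono: "bwc n X \<Longrightarrow> n \<le> m \<Longrightarrow> bwc m X"
  by (auto simp: bwc_def intro: bw_mono)

context hb
begin

definition Wt :: "comb \<Rightarrow> real" where
  "Wt X = wsum (\<lambda>w. power_int 2 (- exp_sum w)) X"

definition eqv :: "nat \<Rightarrow> comb \<Rightarrow> comb \<Rightarrow> bool" where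
  "eqv n X Y \<longleftrightarrow> bwc n X \<and> bwc n Y \<and> Wt X = Wt Y \<and>
     (\<forall>m u v. n \<le> m \<longrightarrow> braid_word m u \<longrightarrow> braid_word m v \<longrightarrow>
        lsum (\<lambda>w. HH m (u @ w @ v)) X = lsum (\<lambda>w. HH m (u @ w @ v)) Y)"

lemma Wt_ctx: "Wt (ctx u X v) = power_int 2 (- exp_sum u - exp_sum v) * Wt X"
proof (induction X)
  case Nil then show ?case by (simp add: Wt_def)
next
  case (Cons x X)
  obtain k j w where x: "x = (k, j, w)" by (cases x) auto
  have "power_int (2::real) (- exp_sum (u @ w @ v)) = power_int 2 (- exp_sum u - exp_sum v) * power_int 2 (- exp_sum w)"
    by (simp add: power_int_add[symmetric] algebra_simps)
  then show ?case using Cons by (simp add: x Wt_def distrib_left ac_simps)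
qed

lemma eqv_refl: "bwc n X \<Longrightarrow> eqv n X X"
  by (simp add: eqv_def)
lemma eqv_sym: "eqv n X Y \<Longrightarrow> eqv n Y X"
  by (simp add: eqv_def)
lemma eqv_trans: "eqv n X Y \<Longrightarrow> eqv n Y Z \<Longrightarrow> eqv n X Z"
  by (simp add: eqv_def)
lemma eqv_app: "eqv n X Y \<Longrightarrow> eqv n X' Y' \<Longrightarrow> eqv n (X @ X') (Y @ Y')"
  by (simp add: eqv_def Wt_def)
lemma eqv_sc: "eqv n X Y \<Longrightarrow> eqv n (sc k j X) (sc k j Y)"
  by (simp add: eqv_def Wt_def lsum_sc wsum_sc)
lemma eqv_mono: "eqv n X Y \<Longrightarrow> n \<le> N \<Longrightarrow> eqv N X Y"
  unfolding eqv_def using bwc_mono by auto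
lemma eqv_ctx:
  assumes "eqv n X Y" "braid_word n u" "braid_word n v"
  shows "eqv n (ctx u X v) (ctx u Y v)"
proof -
  have "bwc n (ctx u X v)" "bwc n (ctx u Y v)"
    using assms by (auto simp: eqv_def intro!: bwc_ctx)
  moreover have "Wt (ctx u X v) = Wt (ctx u Y v)"
    using assms by (simp add: Wt_ctx eqv_def)
  moreover have "lsum (\<lambda>w. HH m (u' @ w @ v')) (ctx u X v) = lsum (\<lambda>w. HH m (u' @ w @ v')) (ctx u Y v)"
    if "n \<le> m" "braid_word m u'" "braid_word m v'" for m u' v'
  proof -
    have "braid_word m (u' @ u)" "braid_word m (v @ v')"
      using that assms bw_mono by auto
    then have "lsum (\<lambda>w. HH m ((u' @ u) @ w @ (v @ v'))) X = lsum (\<lambda>w. HH m ((u' @ u) @ w @ (v @ v'))) Y"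
      using assms(1) that(1) unfolding eqv_def by blast
    then show ?thesis by (simp add: lsum_ctx)
  qed
  ultimately show ?thesis by (simp add: eqv_def)
qed

lemma eqv_lin:
  assumes "bwc n X" "bwc n Y" "\<And>F. lsum F X = lsum F Y" "\<And>G. wsum G X = wsum G Y"
  shows "eqv n X Y"
  using assms by (simp add: eqv_def Wt_def)

lemma eqv_HH:
  assumes "eqv n X Y" "n \<le> m"
  shows "lsum (HH m) X = lsum (HH m) Y"
proof -
  have "lsum (\<lambda>w. HH m ([] @ w @ [])) X = lsum (\<lambda>w. HH m ([] @ w @ [])) Y"
    using assms unfolding eqv_def by (meson bw_Nil)
  then show ?thesis by simp
qed

lemma eqv_Wt: "eqv n X Y \<Longrightarrow> Wt X = Wt Y"
  by (simp add: eqv_def)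

end



context hb
begin

lemma lsum_single: "lsum F [(1, 0, w)] = F w"
  by (simp add: vz_00)

lemma eqv_single_iff:
  "braid_word n w \<and> braid_word n w' \<and> exp_sum w = exp_sum w' \<and>
     (\<forall>m u v. n \<le> m \<longrightarrow> braid_word m u \<longrightarrow> braid_word m v \<longrightarrow> HH m (u @ w @ v) = HH m (u @ w' @ v))
   \<Longrightarrow> eqv n [(1, 0, w)] [(1, 0, w')]"
  by (auto simp: eqv_def lsum_single Wt_def vz_00)

lemma rel_cancel:
  assumes "i \<noteq> 0" "\<bar>i\<bar> < int n"
  shows "eqv n [(1, 0, [i, -i])] [(1, 0, [])]"
  using assms by (intro eqv_single_iff)
  (auto intro!: HH_cancel[simplified] dest: bw_mono simp: sgn_minus)

lemma rel_comm:
  assumes "braid_word n [i, j]" "\<bar>\<bar>i\<bar> - \<bar>j\<bar>\<bar> \<ge> 2"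
  shows "eqv n [(1, 0, [i, j])] [(1, 0, [j, i])]"
  using assms by (intro eqv_single_iff)
  (auto intro!: HH_comm[simplified] dest: bw_mono)

lemma rel_braid:
  assumes "0 < i" "i + 1 < int n"
  shows "eqv n [(1, 0, [i, i + 1, i])] [(1, 0, [i + 1, i, i + 1])]"
  using assms by (intro eqv_single_iff)
  (auto intro!: HH_braid[simplified])

lemma rel_skein:
  assumes "0 < i" "i < int n"
  shows "eqv n [(1, 0, [i])] [(1, 0, [-i]), (1, 1, [])]"
proof -
  have si: "sgn i = 1" "sgn (-i) = -1" using assms by auto
  have W: "Wt [(1, 0, [i])] = Wt [(1, 0, [-i]), (1, 1, [])]"
    using si by (simp add: Wt_def power_int_minus)
  have L: "lsum (\<lambda>w. HH m (u @ w @ v)) [(1, 0, [i])] = lsum (\<lambda>w. HH m (u @ w @ v)) [(1, 0, [-i]), (1, 1, [])]"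
    if "n \<le> m" "braid_word m u" "braid_word m v" for m u v
    using HH_skein[of m u v i] that assms by (simp add: vz_00)
  show ?thesis unfolding eqv_def using assms W L by auto
qed

lemma rel_inv:
  assumes "0 < i" "i < int n"
  shows "eqv n [(1, 0, [-i])] [(1, 0, [i]), (-1, 1, [])]"
proof -
  have si: "sgn i = 1" "sgn (-i) = -1" using assms by auto
  have W: "Wt [(1, 0, [-i])] = Wt [(1, 0, [i]), (-1, 1, [])]"
    using si by (simp add: Wt_def power_int_minus)
  have L: "lsum (\<lambda>w. HH m (u @ w @ v)) [(1, 0, [-i])] = lsum (\<lambda>w. HH m (u @ w @ v)) [(1, 0, [i]), (-1, 1, [])]"
    if "n \<le> m" "braid_word m u" "braid_word m v" for m u v
    using HH_skein[of m u v i] that assms by (simp add: vz_00)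
  show ?thesis unfolding eqv_def using assms W L by auto
qed

lemma rel_sq:
  assumes "0 < i" "i < int n"
  shows "eqv n [(1, 0, [i, i])] [(1, 0, []), (1, 1, [i])]"
proof -
  have si: "sgn i = 1" "sgn (-i) = -1" using assms by auto
  have W: "Wt [(1, 0, [i, i])] = Wt [(1, 0, []), (1, 1, [i])]"
    using si by (simp add: Wt_def power_int_minus)
  have L: "lsum (\<lambda>w. HH m (u @ w @ v)) [(1, 0, [i, i])] = lsum (\<lambda>w. HH m (u @ w @ v)) [(1, 0, []), (1, 1, [i])]"
    if "n \<le> m" "braid_word m u" "braid_word m v" for m u v
  proof -
    have "HH m ((u @ [i]) @ [i] @ v) = HH m ((u @ [i]) @ [-i] @ v) + vz 0 1 * HH m ((u @ [i]) @ v)"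
      using HH_skein[of m "u @ [i]" v i] that assms by simp
    moreover have "HH m ((u @ [i]) @ [-i] @ v) = HH m (u @ v)"
      using HH_cancel[of m u v i] that assms by simp
    ultimately show ?thesis by (simp add: vz_00)
  qed
  show ?thesis unfolding eqv_def using assms W L by auto
qed

lemma eqv_rw:
  assumes "eqv n [(1, 0, w)] Y" "braid_word n u" "braid_word n v"
  shows "eqv n [(1, 0, u @ w @ v)] (ctx u Y v)"
  using eqv_ctx[OF assms] by simp

lemma eqv_rw1:
  assumes "eqv n [(1, 0, w)] [(1, 0, w')]" "braid_word n u" "braid_word n v"
  shows "eqv n [(1, 0, u @ w @ v)] [(1, 0, u @ w' @ v)]"
  using eqv_ctx[OF assms] by simp

lemma comm_word:
  assumes "g \<noteq> 0" "\<bar>g\<bar> < int n" "braid_word n w" "\<forall>l\<in>set w. 2 \<le> \<bar>\<bar>g\<bar> - \<bar>l\<bar>\<bar>"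
  shows "eqv n [(1, 0, g # w)] [(1, 0, w @ [g])]"
  using assms(3,4)
proof (induction w)
  case Nil then show ?case using assms by (auto intro: eqv_refl)
next
  case (Cons l w)
  have "eqv n [(1, 0, [] @ [g, l] @ w)] [(1, 0, [] @ [l, g] @ w)]"
    by (rule eqv_rw1) (use Cons.prems assms in \<open>auto intro!: rel_comm\<close>)
  moreover have "eqv n [(1, 0, [l] @ (g # w) @ [])] [(1, 0, [l] @ (w @ [g]) @ [])]"
    by (rule eqv_rw1) (use Cons in auto)
  ultimately show ?case using eqv_trans by simp
qed

end



definition fm :: "nat \<Rightarrow> int list \<Rightarrow> bool" where
  "fm n w \<longleftrightarrow> braid_word n w \<or> (\<exists>a b. w = a @ [int n] @ b \<and> braid_word n a \<and> braid_word n b)"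
definition fmc :: "nat \<Rightarrow> comb \<Rightarrow> bool" where
  "fmc n X \<longleftrightarrow> (\<forall>(k, j, w)\<in>set X. fm n w)"

lemma fmc_Nil[simp]: "fmc n []" by (simp add: fmc_def)
lemma fmc_Cons[simp]: "fmc n ((k, j, w) # X) = (fm n w \<and> fmc n X)" by (simp add: fmc_def)
lemma fmc_append[simp]: "fmc n (X @ Y) = (fmc n X \<and> fmc n Y)" by (simp add: fmc_def ball_Un)
lemma fmc_sc[simp]: "fmc n (sc k j X) = fmc n X" by (induction X) auto

context hb
begin

declare eqv_trans[trans]

lemma lift:
  assumes "\<And>k j f. (k, j, f) \<in> set X \<Longrightarrow> \<exists>Y. fmc n Y \<and> eqv N [(1, 0, u @ f @ v)] Y"
  shows "\<exists>Z. fmc n Z \<and> eqv N (ctx u X v) Z"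
  using assms
proof (induction X)
  case Nil then show ?case by (intro exI[of _ "[]"]) (simp add: eqv_refl)
next
  case (Cons x X)
  obtain k j f where x: "x = (k, j, f)" by (cases x) auto
  have "(k, j, f) \<in> set (x # X)" by (simp add: x)
  from Cons.prems[OF this] obtain Y where Y: "fmc n Y" "eqv N [(1, 0, u @ f @ v)] Y" by (elim exE conjE)
  have pre: "\<And>k' j' f'. (k', j', f') \<in> set X \<Longrightarrow> \<exists>Y. fmc n Y \<and> eqv N [(1, 0, u @ f' @ v)] Y"
  proof -
    fix k' j' f' assume "(k', j', f') \<in> set X"
    then have "(k', j', f') \<in> set (x # X)" by simp
    then show "\<exists>Y. fmc n Y \<and> eqv N [(1, 0, u @ f' @ v)] Y" by (rule Cons.prems)
  qed
  have "\<exists>Z. fmc n Z \<and> eqv N (ctx u X v) Z" by (rule Cons.IH) (rule pre)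
  then obtain Z where Z: "fmc n Z" "eqv N (ctx u X v) Z" by (elim exE conjE)
  have "eqv N (sc k j [(1, 0, u @ f @ v)] @ ctx u X v) (sc k j Y @ Z)"
    by (intro eqv_app eqv_sc Y Z)
  then have "eqv N (ctx u (x # X) v) (sc k j Y @ Z)" by (simp add: x)
  then show ?case using Y Z by (intro exI[of _ "sc k j Y @ Z"]) simp
qed

lemma fm_bw: "fm n w \<Longrightarrow> n \<ge> 1 \<Longrightarrow> braid_word (Suc n) w"
  using bw_mono[of n _ "Suc n"] by (auto simp: fm_def)

lemma comm_low:
  assumes "braid_word (n - 1) e" "n \<ge> 1"
  shows "eqv (Suc n) [(1, 0, int n # e)] [(1, 0, e @ [int n])]"
proof (rule comm_word)
  show "braid_word (Suc n) e" using assms bw_mono by auto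
  show "\<forall>l\<in>set e. 2 \<le> \<bar>\<bar>int n\<bar> - \<bar>l\<bar>\<bar>" using assms by (auto simp: braid_word_def)
qed (use assms in auto)

lemma step_sq:
  assumes IHn: "\<And>b. braid_word n b \<Longrightarrow> \<exists>Y. fmc (n - 1) Y \<and> eqv n [(1, 0, b)] Y"
    and n1: "n \<ge> 1" and ab: "braid_word n a" "braid_word n b"
  shows "\<exists>Y. fmc n Y \<and> eqv (Suc n) [(1, 0, a @ [int n] @ b @ [int n])] Y"
proof -
  obtain Y0 where Y0: "fmc (n - 1) Y0" "eqv n [(1, 0, b)] Y0" using IHn ab by blast
  have bwY0: "bwc n Y0" using Y0 by (simp add: eqv_def)
  have aS: "braid_word (Suc n) a" using ab bw_mono by auto
  have e1: "eqv (Suc n) [(1, 0, (a @ [int n]) @ b @ [int n])] (ctx (a @ [int n]) Y0 [int n])"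
    by (rule eqv_rw) (use eqv_mono[OF Y0(2)] aS n1 in auto)
  have "\<exists>Z. fmc n Z \<and> eqv (Suc n) (ctx (a @ [int n]) Y0 [int n]) Z"
  proof (rule lift)
    fix k j f assume kf: "(k, j, f) \<in> set Y0"
    then have fm: "fm (n - 1) f" and bf: "braid_word n f"
      using Y0(1) bwY0 by (auto simp: fmc_def bwc_def)
    have fS: "braid_word (Suc n) f" using bf bw_mono by auto
    show "\<exists>Y. fmc n Y \<and> eqv (Suc n) [(1, 0, (a @ [int n]) @ f @ [int n])] Y"
    proof (cases "braid_word (n - 1) f")
      case True
      have "eqv (Suc n) [(1, 0, (a @ [int n]) @ f @ [int n])] [(1, 0, a @ (f @ [int n]) @ [int n])]"
        using eqv_rw1[OF comm_low[OF True n1], of a "[int n]"] aS n1 by simp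
      also have "eqv (Suc n) \<dots> (ctx (a @ f) [(1, 0, []), (1, 1, [int n])] [])"
        using eqv_rw[OF rel_sq[of "int n" "Suc n"], of "a @ f" "[]"] aS fS n1 by simp
      finally have "eqv (Suc n) [(1, 0, (a @ [int n]) @ f @ [int n])] [(1, 0, a @ f), (1, 1, (a @ f) @ [int n] @ [])]"
        by simp
      moreover have "fmc n [(1, 0, a @ f), (1, 1, (a @ f) @ [int n] @ [])]"
      proof -
        have "braid_word n (a @ f)" "braid_word n []" using ab bf by auto
        then have "fm n (a @ f)" "fm n ((a @ f) @ [int n] @ [])" unfolding fm_def by blast+
        then show ?thesis by (simp only: fmc_Cons fmc_Nil)
      qed
      ultimately show ?thesis by blast
    next
      case False
      then obtain e f' where f: "f = e @ [int (n - 1)] @ f'" and ef: "braid_word (n - 1) e" "braid_word (n - 1) f'"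
        using fm by (auto simp: fm_def)
      have n2: "n \<ge> 2" using bf f by (auto simp: braid_word_def)
      have i: "int (n - 1) = int n - 1" using n1 by simp
      have eS: "braid_word (Suc n) e" "braid_word (Suc n) f'" using ef bw_mono by auto
      have bn1: "braid_word (Suc n) [int n - 1]" using n2 by auto
      have "eqv (Suc n) [(1, 0, (a @ [int n]) @ f @ [int n])] [(1, 0, a @ (e @ [int n]) @ ([int n - 1] @ f' @ [int n]))]"
        using eqv_rw1[OF comm_low[OF ef(1) n1], of a "[int n - 1] @ f' @ [int n]"] aS eS n1 n2 f i by simp
      also have "eqv (Suc n) \<dots> [(1, 0, (a @ e @ [int n] @ [int n - 1]) @ (int n # f') @ [])]"
        using eqv_rw1[OF eqv_sym[OF comm_low[OF ef(2) n1]], of "a @ e @ [int n] @ [int n - 1]" "[]"] aS eS n1 n2 by simp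
      also have "eqv (Suc n) \<dots> [(1, 0, (a @ e) @ [int n - 1, int n - 1 + 1, int n - 1] @ f')]"
        using eqv_rw1[OF eqv_sym[OF rel_braid[of "int n - 1" "Suc n"]], of "a @ e" f'] aS eS n1 n2 by simp
      finally have "eqv (Suc n) [(1, 0, (a @ [int n]) @ f @ [int n])] [(1, 0, (a @ e @ [int n - 1]) @ [int n] @ ([int n - 1] @ f'))]"
        by simp
      moreover have "fmc n [(1, 0, (a @ e @ [int n - 1]) @ [int n] @ ([int n - 1] @ f'))]"
      proof -
        have "braid_word n (a @ e @ [int n - 1])" "braid_word n ([int n - 1] @ f')"
          using ab ef n2 bw_mono[of "n - 1" _ n] by auto
        then have "fm n ((a @ e @ [int n - 1]) @ [int n] @ ([int n - 1] @ f'))"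
          unfolding fm_def by blast
        then show ?thesis by (simp only: fmc_Cons fmc_Nil) 
      qed
      ultimately show ?thesis by blast
    qed
  qed
  then obtain Z where Z: "fmc n Z" "eqv (Suc n) (ctx (a @ [int n]) Y0 [int n]) Z" by blast
  have "eqv (Suc n) [(1, 0, a @ [int n] @ b @ [int n])] Z" using eqv_trans[OF e1 Z(2)] by simp
  then show ?thesis using Z(1) by blast
qed

lemma step_pos:
  assumes IHn: "\<And>b. braid_word n b \<Longrightarrow> \<exists>Y. fmc (n - 1) Y \<and> eqv n [(1, 0, b)] Y"
    and n1: "n \<ge> 1" and fm: "fm n f"
  shows "\<exists>Y. fmc n Y \<and> eqv (Suc n) [(1, 0, f @ [int n])] Y"
proof (cases "braid_word n f")
  case True
  have "fm n (f @ [int n] @ [])" unfolding fm_def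
    by (intro disjI2 exI[of _ f] exI[of _ "[]"]) (simp add: True)
  moreover have "eqv (Suc n) [(1, 0, f @ [int n])] [(1, 0, f @ [int n])]"
    using True n1 bw_mono[of n f "Suc n"] by (intro eqv_refl) simp
  ultimately show ?thesis by (intro exI[of _ "[(1, 0, f @ [int n])]"]) simp
next
  case False
  then obtain a b where "f = a @ [int n] @ b" "braid_word n a" "braid_word n b"
    using fm unfolding fm_def by blast
  then show ?thesis using step_sq[OF IHn n1, of a b] by simp
qed

lemma step:
  assumes IHn: "\<And>b. braid_word n b \<Longrightarrow> \<exists>Y. fmc (n - 1) Y \<and> eqv n [(1, 0, b)] Y"
    and fm: "fm n f" and g: "g \<noteq> 0" "\<bar>g\<bar> < int (Suc n)"
  shows "\<exists>Y. fmc n Y \<and> eqv (Suc n) [(1, 0, f @ [g])] Y"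
proof -
  have n1: "n \<ge> 1" using g by auto
  have fS: "braid_word (Suc n) f" using fm_bw[OF fm n1] .
  consider "\<bar>g\<bar> < int n" | "g = int n" | "g = - int n" using g by linarith
  then show ?thesis
  proof cases
    case 1
    have gb: "braid_word n [g]" using 1 g by simp
    have fm': "fm n (f @ [g])"
    proof (cases "braid_word n f")
      case True then show ?thesis using gb unfolding fm_def by simp
    next
      case False
      then obtain a b where "f = a @ [int n] @ b" "braid_word n a" "braid_word n b"
        using fm unfolding fm_def by blast
      then have "f @ [g] = a @ [int n] @ (b @ [g])" "braid_word n (b @ [g])" using gb by auto
      then show ?thesis unfolding fm_def using \<open>braid_word n a\<close>
        by (intro disjI2 exI[of _ a] exI[of _ "b @ [g]"]) simp
    qed
    have "eqv (Suc n) [(1, 0, f @ [g])] [(1, 0, f @ [g])]"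
      using fS g by (intro eqv_refl) simp
    then show ?thesis using fm' by (intro exI[of _ "[(1, 0, f @ [g])]"]) simp
  next
    case 2 then show ?thesis using step_pos[OF IHn n1 fm] by simp
  next
    case 3
    obtain Y1 where Y1: "fmc n Y1" "eqv (Suc n) [(1, 0, f @ [int n])] Y1"
      using step_pos[OF IHn n1 fm] by blast
    have "eqv (Suc n) [(1, 0, f @ [- int n] @ [])] (ctx f [(1, 0, [int n]), (-1, 1, [])] [])"
      by (rule eqv_rw[OF rel_inv[of "int n" "Suc n"]]) (use n1 fS in auto)
    then have "eqv (Suc n) [(1, 0, f @ [g])] ([(1, 0, f @ [int n])] @ [(-1, 1, f)])"
      using 3 by simp
    also have "eqv (Suc n) \<dots> (Y1 @ [(-1, 1, f)])"
      by (intro eqv_app Y1(2) eqv_refl) (simp add: fS)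
    finally show ?thesis using Y1(1) fm by (intro exI[of _ "Y1 @ [(-1, 1, f)]"]) simp
  qed
qed

lemma span_n:
  assumes IHn: "\<And>b. braid_word n b \<Longrightarrow> \<exists>Y. fmc (n - 1) Y \<and> eqv n [(1, 0, b)] Y"
  shows "braid_word (Suc n) w \<Longrightarrow> \<exists>X. fmc n X \<and> eqv (Suc n) [(1, 0, w)] X"
proof (induction w rule: rev_induct)
  case Nil
  have "fm n []" by (simp add: fm_def)
  then show ?case by (intro exI[of _ "[(1, 0, [])]"]) (simp add: eqv_refl)
next
  case (snoc g w)
  have wb: "braid_word (Suc n) w" and g: "g \<noteq> 0" "\<bar>g\<bar> < int (Suc n)" using snoc.prems by auto
  obtain X where X: "fmc n X" "eqv (Suc n) [(1, 0, w)] X" using snoc.IH[OF wb] by blast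
  have e1: "eqv (Suc n) [(1, 0, [] @ w @ [g])] (ctx [] X [g])"
    by (rule eqv_rw[OF X(2)]) (use g in auto)
  have "\<exists>Z. fmc n Z \<and> eqv (Suc n) (ctx [] X [g]) Z"
  proof (rule lift)
    fix k j f assume "(k, j, f) \<in> set X"
    then have "fm n f" using X(1) by (auto simp: fmc_def)
    then show "\<exists>Y. fmc n Y \<and> eqv (Suc n) [(1, 0, [] @ f @ [g])] Y"
      using step[OF IHn _ g] by simp
  qed
  then obtain Z where Z: "fmc n Z" "eqv (Suc n) (ctx [] X [g]) Z" by blast
  have "eqv (Suc n) [(1, 0, w @ [g])] Z" using eqv_trans[OF e1 Z(2)] by simp
  then show ?case using Z(1) by blast
qed

lemma span: "braid_word (Suc n) w \<Longrightarrow> \<exists>X. fmc n X \<and> eqv (Suc n) [(1, 0, w)] X"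
proof (induction n arbitrary: w)
  case 0
  have IH0: "\<exists>Y. fmc (0 - 1) Y \<and> eqv 0 [(1, 0, b)] Y" if "braid_word 0 b" for b
  proof -
    have "b = []" using that by (cases b) auto
    moreover have "fm (0 - 1) []" by (simp add: fm_def)
    ultimately show ?thesis by (intro exI[of _ "[(1, 0, [])]"]) (simp add: eqv_refl)
  qed
  show ?case by (rule span_n[OF IH0 0])
next
  case (Suc n)
  have IH: "\<exists>Y. fmc (Suc n - 1) Y \<and> eqv (Suc n) [(1, 0, b)] Y" if "braid_word (Suc n) b" for b
    using Suc.IH[OF that] by simp
  show ?case by (rule span_n[OF IH Suc.prems])
qed

end



lemma lookup_lsum: "Poly_Mapping.lookup (lsum F X) (d, b) = (\<Sum>(k, j, w)\<leftarrow>X. k * Poly_Mapping.lookup (F w) (d, b - j))"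
  by (induction X) (auto simp: lookup_add lookup_coef)

lemma ev_lsum: "ev (lsum F X) = wsum (\<lambda>w. ev (F w)) X"
  by (induction X) (auto simp: ev_add ev_of_int_mult ev_vz_mult mult.assoc ev_zero)

lemma lookup_down: "Poly_Mapping.lookup ((vz (-1) (-1) - vz 1 (-1)) * h) (d, b)
   = Poly_Mapping.lookup h (d + 1, b + 1) - Poly_Mapping.lookup h (d - 1, b + 1)"
  by (simp add: left_diff_distrib lookup_minus lookup_vz_mult)

lemma ev_down: "ev ((vz (-1) (-1) - vz 1 (-1)) * h) = ev h"
proof -
  have "ev ((vz (-1) (-1) - vz 1 (-1)) * h) = (power_int 2 (-1) * power_int (-3/2) (-1) - power_int 2 1 * power_int (-3/2) (-1)) * ev h"
    by (simp add: left_diff_distrib ev_diff ev_vz_mult)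
  also have "\<dots> = ev h" by (simp add: power_int_minus)
  finally show ?thesis .
qed

definition vlow :: "nat \<Rightarrow> lpoly \<Rightarrow> bool" where
  "vlow n p \<longleftrightarrow> (\<forall>d b. (d < 1 - int n \<or> int n - 1 < d) \<longrightarrow> Poly_Mapping.lookup p (d, b) = 0)"

context hb
begin

lemma form_prop:
  assumes n1: "n \<ge> 1" and IH: "\<And>w. braid_word n w \<Longrightarrow> vlow n (HH n w) \<and> ev (HH n w) = power_int 2 (- exp_sum w)"
    and fm: "fm n f"
  shows "vlow (Suc n) (HH (Suc n) f) \<and> ev (HH (Suc n) f) = power_int 2 (- exp_sum f)"
proof (cases "braid_word n f")
  case True
  have H: "HH (Suc n) f = (vz (-1) (-1) - vz 1 (-1)) * HH n f" by (rule HH_down[OF n1 True])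
  have "vlow (Suc n) (HH (Suc n) f)"
    using IH[OF True] unfolding vlow_def H lookup_down by auto
  moreover have "ev (HH (Suc n) f) = power_int 2 (- exp_sum f)"
    using IH[OF True] unfolding H ev_down by simp
  ultimately show ?thesis ..
next
  case False
  then obtain a b where f: "f = a @ [int n] @ b" and ab: "braid_word n a" "braid_word n b"
    using fm unfolding fm_def by blast
  have H: "HH (Suc n) f = vz (-1) 0 * HH n (a @ b)" unfolding f by (rule HH_stab[OF n1 ab])
  have abw: "braid_word n (a @ b)" using ab by simp
  have "vlow (Suc n) (HH (Suc n) f)"
    using IH[OF abw] unfolding vlow_def H lookup_vz_mult by auto
  moreover have "ev (HH (Suc n) f) = power_int 2 (- exp_sum f)"
  proof -
    have "sgn (int n) = 1" using n1 by simp
    then have e: "exp_sum f = exp_sum (a @ b) + 1" unfolding f by simp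
    have "ev (HH (Suc n) f) = power_int 2 (-1) * power_int 2 (- exp_sum (a @ b))"
      using IH[OF abw] unfolding H ev_vz_mult by simp
    also have "\<dots> = power_int 2 (-1 + - exp_sum (a @ b))" by (rule power_int_add[symmetric]) simp
    also have "-1 + - exp_sum (a @ b) = - exp_sum f" using e by simp
    finally show ?thesis .
  qed
  ultimately show ?thesis ..
qed

lemma mfw_step:
  assumes n1: "n \<ge> 1" and IH: "\<And>w. braid_word n w \<Longrightarrow> vlow n (HH n w) \<and> ev (HH n w) = power_int 2 (- exp_sum w)"
    and w: "braid_word (Suc n) w"
  shows "vlow (Suc n) (HH (Suc n) w) \<and> ev (HH (Suc n) w) = power_int 2 (- exp_sum w)"
proof -
  obtain X where X: "fmc n X" "eqv (Suc n) [(1, 0, w)] X" using span[OF w] by blast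
  have HX: "HH (Suc n) w = lsum (HH (Suc n)) X"
    using eqv_HH[OF X(2) order_refl] by (simp add: vz_00)
  have FP: "\<And>k j f. (k, j, f) \<in> set X \<Longrightarrow> vlow (Suc n) (HH (Suc n) f) \<and> ev (HH (Suc n) f) = power_int 2 (- exp_sum f)"
    using form_prop[OF n1 IH] X(1) by (auto simp: fmc_def)
  have "vlow (Suc n) (lsum (HH (Suc n)) X)"
    unfolding vlow_def lookup_lsum
  proof (intro allI impI)
    fix d b assume d: "d < 1 - int (Suc n) \<or> int (Suc n) - 1 < d"
    have "\<forall>x\<in>set X. (case x of (k, j, w) \<Rightarrow> k * Poly_Mapping.lookup (HH (Suc n) w) (d, b - j)) = 0"
      using FP d unfolding vlow_def by auto
    then show "(\<Sum>(k, j, w)\<leftarrow>X. k * Poly_Mapping.lookup (HH (Suc n) w) (d, b - j)) = 0"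
      by (induction X) auto
  qed
  moreover have "ev (lsum (HH (Suc n)) X) = power_int 2 (- exp_sum w)"
  proof -
    have "ev (lsum (HH (Suc n)) X) = wsum (\<lambda>w. ev (HH (Suc n) w)) X" by (rule ev_lsum)
    also have "\<dots> = wsum (\<lambda>w. power_int 2 (- exp_sum w)) X"
      using FP unfolding wsum_def by (intro arg_cong[where f=sum_list] map_cong) auto
    also have "\<dots> = Wt X" by (simp add: Wt_def)
    also have "\<dots> = Wt [(1, 0, w)]" using eqv_Wt[OF X(2)] by simp
    also have "\<dots> = power_int 2 (- exp_sum w)" by (simp add: Wt_def)
    finally show ?thesis .
  qed
  ultimately show ?thesis using HX by simp
qed

lemma mfw: "braid_word (Suc m) w \<Longrightarrow> vlow (Suc m) (HH (Suc m) w) \<and> ev (HH (Suc m) w) = power_int 2 (- exp_sum w)"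
proof (induction m arbitrary: w)
  case 0
  then have "w = []" by (cases w) auto
  then show ?case using HH_one by (simp add: vlow_def lookup_one ev_one zero_prod_def)
next
  case (Suc m)
  show ?case by (rule mfw_step[OF _ Suc.IH Suc.prems]) simp
qed

lemma HH_nonzero: "braid_word (Suc m) w \<Longrightarrow> HH (Suc m) w \<noteq> 0"
  using mfw[of m w] ev_zero by auto

end



definition sw :: "nat \<Rightarrow> int list" where "sw m = map int [1..<m]"
definition cw :: "nat \<Rightarrow> int list" where "cw m = rev (sw m) @ sw m"

lemma sw_Suc: "m \<ge> 1 \<Longrightarrow> sw (Suc m) = sw m @ [int m]"
  by (simp add: sw_def)
lemma sw_0[simp]: "sw 0 = []" by (simp add: sw_def)
lemma sw_1[simp]: "sw 1 = []" by (simp add: sw_def)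
lemma sw_set: "l \<in> set (sw m) \<Longrightarrow> 1 \<le> l \<and> l < int m"
  by (auto simp: sw_def)
lemma bw_sw: "braid_word m (sw m)"
  using sw_set unfolding braid_word_def by fastforce
lemma bw_cw: "braid_word m (cw m)"
  using bw_sw[of m] by (simp add: cw_def braid_word_def)
lemma cw_1[simp]: "cw 1 = []" by (simp add: cw_def sw_def)
lemma sw_Suc0[simp]: "sw (Suc 0) = []" by (simp add: sw_def)
lemma cw_Suc0[simp]: "cw (Suc 0) = []" by (simp add: cw_def sw_def)
lemma cw_Suc: "m \<ge> 1 \<Longrightarrow> cw (Suc m) = [int m] @ cw m @ [int m]"
  by (simp add: cw_def sw_Suc)

lemma ht_Suc: "half_twist (Suc m) = sw (Suc m) @ half_twist m"
proof -
  have "[0..<Suc m] = 0 # map Suc [0..<m]" by (simp add: map_Suc_upt upt_conv_Cons)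
  then show ?thesis by (simp add: half_twist_def sw_def comp_def)
qed
lemma ht_0[simp]: "half_twist 0 = []" by (simp add: half_twist_def)
lemma ht_set: "l \<in> set (half_twist m) \<Longrightarrow> 1 \<le> l \<and> l < int m"
proof (induction m)
  case 0 then show ?case by simp
next
  case (Suc m) then show ?case using sw_set[of l "Suc m"] by (auto simp: ht_Suc)
qed
lemma bw_ht: "braid_word m (half_twist m)"
  using ht_set unfolding braid_word_def by force
lemma es_sw: "exp_sum (sw m) = int m - 1 \<or> m = 0"
proof -
  have "exp_sum (map int xs) = int (length xs)" if "0 \<notin> set xs" for xs
    using that by (induction xs) auto
  then show ?thesis by (cases m) (auto simp: sw_def)
qed
lemma es_ht: "2 * exp_sum (half_twist m) = int m * (int m - 1)"
proof (induction m)
  case 0 then show ?case by simp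
next
  case (Suc m)
  have "exp_sum (sw (Suc m)) = int m" using es_sw[of "Suc m"] by simp
  then show ?case using Suc by (simp add: ht_Suc algebra_simps)
qed
lemma es_ft: "exp_sum (full_twist n) = int n * (int n - 1)"
  using es_ht[of n] by (simp add: full_twist_def)
lemma bw_ft: "braid_word n (full_twist n)"
  by (simp add: full_twist_def bw_ht)

lemma sw_split:
  assumes "1 \<le> k" "k + 1 \<le> n"
  shows "sw (Suc n) = map int [1..<k] @ [int k, int k + 1] @ map int [k + 2..<Suc n]"
proof -
  have "[1..<Suc n] = [1..<k + (Suc n - k)]" using assms by simp
  also have "\<dots> = [1..<k] @ [k..<k + (Suc n - k)]" by (rule upt_add_eq_append) (use assms in simp)
  finally have "[1..<Suc n] = [1..<k] @ [k..<Suc n]" using assms by simp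
  moreover have "[k..<Suc n] = k # Suc k # [k + 2..<Suc n]" using assms by (simp add: upt_conv_Cons)
  ultimately show ?thesis by (simp add: sw_def)
qed

context hb
begin

lemma K:
  assumes k: "1 \<le> k" "k + 1 \<le> n"
  shows "eqv (Suc n) [(1, 0, sw (Suc n) @ [int k])] [(1, 0, [int k + 1] @ sw (Suc n))]"
proof -
  define A where "A = map int [1..<k]"
  define B where "B = map int [k + 2..<Suc n]"
  have S: "sw (Suc n) = A @ [int k, int k + 1] @ B" unfolding A_def B_def by (rule sw_split[OF k])
  have bA: "braid_word (Suc n) A" and bB: "braid_word (Suc n) B" using k by (auto simp: A_def B_def braid_word_def)
  have lA: "\<forall>l\<in>set A. 2 \<le> \<bar>\<bar>int k + 1\<bar> - \<bar>l\<bar>\<bar>" using k by (auto simp: A_def)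
  have lB: "\<forall>l\<in>set B. 2 \<le> \<bar>\<bar>int k\<bar> - \<bar>l\<bar>\<bar>" using k by (auto simp: B_def)
  have "eqv (Suc n) [(1, 0, A @ [int k, int k + 1] @ B @ [int k])] [(1, 0, (A @ [int k, int k + 1]) @ (int k # B) @ [])]"
    using eqv_rw1[OF eqv_sym[OF comm_word[OF _ _ bB lB]], of "A @ [int k, int k + 1]" "[]"] k bA bB
    by simp
  also have "eqv (Suc n) \<dots> [(1, 0, A @ [int k + 1, int k, int k + 1] @ B)]"
    using eqv_rw1[OF rel_braid[of "int k" "Suc n"], of A B] k bA bB by simp
  also have "eqv (Suc n) \<dots> [(1, 0, [] @ ((int k + 1) # A) @ ([int k, int k + 1] @ B))]"
    using eqv_rw1[OF eqv_sym[OF comm_word[OF _ _ bA lA]], of "[]" "[int k, int k + 1] @ B"] k bA bB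
    by simp
  finally show ?thesis unfolding S by simp
qed

lemma K':
  assumes k: "1 \<le> k" "k + 1 \<le> n"
  shows "eqv (Suc n) [(1, 0, rev (sw (Suc n)) @ [int k + 1])] [(1, 0, [int k] @ rev (sw (Suc n)))]"
proof -
  define A where "A = rev (map int [1..<k])"
  define B where "B = rev (map int [k + 2..<Suc n])"
  have S: "rev (sw (Suc n)) = B @ [int k + 1, int k] @ A" unfolding A_def B_def sw_split[OF k] by simp
  have bA: "braid_word (Suc n) A" and bB: "braid_word (Suc n) B" using k by (auto simp: A_def B_def braid_word_def)
  have lA: "\<forall>l\<in>set A. 2 \<le> \<bar>\<bar>int k + 1\<bar> - \<bar>l\<bar>\<bar>" using k by (auto simp: A_def)
  have lB: "\<forall>l\<in>set B. 2 \<le> \<bar>\<bar>int k\<bar> - \<bar>l\<bar>\<bar>" using k by (auto simp: B_def)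
  have "eqv (Suc n) [(1, 0, B @ [int k + 1, int k] @ A @ [int k + 1])] [(1, 0, (B @ [int k + 1, int k]) @ ((int k + 1) # A) @ [])]"
    using eqv_rw1[OF eqv_sym[OF comm_word[OF _ _ bA lA]], of "B @ [int k + 1, int k]" "[]"] k bA bB
    by simp
  also have "eqv (Suc n) \<dots> [(1, 0, B @ [int k, int k + 1, int k] @ A)]"
    using eqv_rw1[OF eqv_sym[OF rel_braid[of "int k" "Suc n"]], of B A] k bA bB by simp
  also have "eqv (Suc n) \<dots> [(1, 0, [] @ (int k # B) @ ([int k + 1, int k] @ A))]"
    using eqv_rw1[OF eqv_sym[OF comm_word[OF _ _ bB lB]], of "[]" "[int k + 1, int k] @ A"] k bA bB
    by simp
  finally show ?thesis unfolding S by simp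
qed

lemma JM_pos:
  assumes k: "1 \<le> k" "k + 1 \<le> n"
  shows "eqv (Suc n) [(1, 0, int k # cw (Suc n))] [(1, 0, cw (Suc n) @ [int k])]"
proof -
  have b1: "braid_word (Suc n) (rev (sw (Suc n)))" "braid_word (Suc n) (sw (Suc n))"
    using bw_sw[of "Suc n"] by (auto simp: braid_word_def)
  have "eqv (Suc n) [(1, 0, [] @ ([int k] @ rev (sw (Suc n))) @ sw (Suc n))] [(1, 0, [] @ (rev (sw (Suc n)) @ [int k + 1]) @ sw (Suc n))]"
    by (rule eqv_rw1[OF eqv_sym[OF K'[OF k]]]) (use b1 in auto)
  also have "eqv (Suc n) \<dots> [(1, 0, rev (sw (Suc n)) @ ([int k + 1] @ sw (Suc n)) @ [])]"
    by simp (rule eqv_refl, use b1 k in auto)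
  also have "eqv (Suc n) \<dots> [(1, 0, rev (sw (Suc n)) @ (sw (Suc n) @ [int k]) @ [])]"
    by (rule eqv_rw1[OF eqv_sym[OF K[OF k]]]) (use b1 in auto)
  finally show ?thesis by (simp add: cw_def)
qed

lemma JM_letter:
  assumes g: "g \<noteq> 0" "\<bar>g\<bar> < int n"
  shows "eqv (Suc n) [(1, 0, g # cw (Suc n))] [(1, 0, cw (Suc n) @ [g])]"
proof (cases "g > 0")
  case True
  then show ?thesis using JM_pos[of "nat g" n] g by simp
next
  case False
  define k where "k = nat (- g)"
  have k: "1 \<le> k" "k + 1 \<le> n" "g = - int k" using g False by (auto simp: k_def)
  have bc: "braid_word (Suc n) (cw (Suc n))" by (rule bw_cw)
  have "eqv (Suc n) [(1, 0, ([g] @ cw (Suc n)) @ [] @ [])] [(1, 0, ([g] @ cw (Suc n)) @ [int k, - int k] @ [])]"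
    by (rule eqv_rw1[OF eqv_sym[OF rel_cancel[of "int k" "Suc n"]]]) (use k bc in auto)
  also have "eqv (Suc n) \<dots> [(1, 0, [g] @ (int k # cw (Suc n)) @ [g])]"
    using eqv_rw1[OF eqv_sym[OF JM_pos[OF k(1,2)]], of "[g]" "[g]"] k bc by simp
  also have "eqv (Suc n) \<dots> [(1, 0, [] @ [g, int k] @ (cw (Suc n) @ [g]))]"
    by simp (rule eqv_refl, use k bc in auto)
  also have "eqv (Suc n) \<dots> [(1, 0, [] @ [] @ (cw (Suc n) @ [g]))]"
    by (rule eqv_rw1) (use rel_cancel[of g "Suc n"] k bc in auto)
  finally show ?thesis using k by simp
qed

lemma JM_word:
  assumes "braid_word n b"
  shows "eqv (Suc n) [(1, 0, b @ cw (Suc n))] [(1, 0, cw (Suc n) @ b)]"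
  using assms
proof (induction b)
  case Nil then show ?case using eqv_refl[of "Suc n" "[(1, 0, cw (Suc n))]"] bw_cw by simp
next
  case (Cons g b)
  have bb: "braid_word (Suc n) b" "g \<noteq> 0" "\<bar>g\<bar> < int n" using Cons.prems bw_mono[of n b "Suc n"] by auto
  have "eqv (Suc n) [(1, 0, [g] @ (b @ cw (Suc n)) @ [])] [(1, 0, [g] @ (cw (Suc n) @ b) @ [])]"
    by (rule eqv_rw1[OF Cons.IH]) (use Cons.prems bb in auto)
  also have "eqv (Suc n) \<dots> [(1, 0, [] @ (cw (Suc n) @ [g]) @ b)]"
    using eqv_rw1[OF JM_letter[OF bb(2,3)], of "[]" b] bb by simp
  finally show ?case by simp
qed

lemma twist_D: "eqv (Suc m) [(1, 0, half_twist (Suc m))] [(1, 0, half_twist m @ rev (sw (Suc m)))]"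
proof (induction m)
  case 0 then show ?case by (simp add: ht_Suc eqv_refl)
next
  case (Suc m)
  have bs: "braid_word (Suc (Suc m)) (sw (Suc (Suc m)))" by (rule bw_sw)
  have bs1: "braid_word (Suc (Suc m)) (sw (Suc m))" "braid_word (Suc (Suc m)) (rev (sw (Suc m)))"
    using bw_sw[of "Suc m"] by (auto simp: braid_word_def)
  have bh: "braid_word (Suc (Suc m)) (half_twist m)" using bw_ht[of m] bw_mono by auto
  have "eqv (Suc (Suc m)) [(1, 0, sw (Suc (Suc m)) @ half_twist (Suc m) @ [])]
      [(1, 0, sw (Suc (Suc m)) @ (half_twist m @ rev (sw (Suc m))) @ [])]"
    by (rule eqv_rw1[OF eqv_mono[OF Suc.IH]]) (use bs in auto)
  also have "eqv (Suc (Suc m)) \<dots> [(1, 0, sw (Suc m) @ (int (Suc m) # half_twist m) @ rev (sw (Suc m)))]"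
    using bs1 bh by (simp add: sw_Suc[of "Suc m"]) (rule eqv_refl, simp)
  also have "eqv (Suc (Suc m)) \<dots> [(1, 0, sw (Suc m) @ (half_twist m @ [int (Suc m)]) @ rev (sw (Suc m)))]"
  proof (rule eqv_rw1[OF comm_word])
    show "\<forall>l\<in>set (half_twist m). 2 \<le> \<bar>\<bar>int (Suc m)\<bar> - \<bar>l\<bar>\<bar>" using ht_set[of _ m] by fastforce
  qed (use bs1 bh in auto)
  finally show ?case by (simp add: ht_Suc sw_Suc[of "Suc m"])
qed

lemma swap3:
  assumes n2: "n \<ge> 2" and x: "braid_word (Suc n) x" and ef: "braid_word (n - 1) e" "braid_word (n - 1) f"
  shows "eqv (Suc n) [(1, 0, x @ [int n] @ e @ [int n - 1] @ f @ [int n])]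
     [(1, 0, (x @ e @ [int n - 1]) @ [int n] @ ([int n - 1] @ f))]"
proof -
  have n1: "n \<ge> 1" using n2 by simp
  have eS: "braid_word (Suc n) e" "braid_word (Suc n) f" using ef bw_mono by auto
  have "eqv (Suc n) [(1, 0, x @ (int n # e) @ ([int n - 1] @ f @ [int n]))] [(1, 0, x @ (e @ [int n]) @ ([int n - 1] @ f @ [int n]))]"
    by (rule eqv_rw1[OF comm_low[OF ef(1) n1]]) (use x eS n2 in auto)
  also have "eqv (Suc n) \<dots> [(1, 0, (x @ e @ [int n] @ [int n - 1]) @ (int n # f) @ [])]"
    using eqv_rw1[OF eqv_sym[OF comm_low[OF ef(2) n1]], of "x @ e @ [int n] @ [int n - 1]" "[]"] x eS n1 n2 by simp
  also have "eqv (Suc n) \<dots> [(1, 0, (x @ e) @ [int n - 1, int n - 1 + 1, int n - 1] @ f)]"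
    using eqv_rw1[OF eqv_sym[OF rel_braid[of "int n - 1" "Suc n"]], of "x @ e" f] x eS n1 n2 by simp
  finally show ?thesis by simp
qed

definition cf :: "nat \<Rightarrow> int list \<Rightarrow> bool" where
  "cf m w \<longleftrightarrow> (\<exists>e f. w = e @ [int m] @ f \<and> braid_word m e \<and> braid_word m f)"

lemma lift_cf:
  assumes "\<And>k j f. (k, j, f) \<in> set X \<Longrightarrow> \<exists>Y. (\<forall>(k, j, w)\<in>set Y. cf m w) \<and> eqv N [(1, 0, u @ f @ v)] Y"
  shows "\<exists>Z. (\<forall>(k, j, w)\<in>set Z. cf m w) \<and> eqv N (ctx u X v) Z"
  using assms
proof (induction X)
  case Nil then show ?case by (intro exI[of _ "[]"]) (simp add: eqv_refl)
next
  case (Cons x X)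
  obtain k j f where x: "x = (k, j, f)" by (cases x) auto
  have "(k, j, f) \<in> set (x # X)" by (simp add: x)
  from Cons.prems[OF this] obtain Y where Y: "\<forall>(k, j, w)\<in>set Y. cf m w" "eqv N [(1, 0, u @ f @ v)] Y" by (elim exE conjE)
  have pre: "\<And>k' j' f'. (k', j', f') \<in> set X \<Longrightarrow> \<exists>Y. (\<forall>(k, j, w)\<in>set Y. cf m w) \<and> eqv N [(1, 0, u @ f' @ v)] Y"
  proof -
    fix k' j' f' assume "(k', j', f') \<in> set X"
    then have "(k', j', f') \<in> set (x # X)" by simp
    then show "\<exists>Y. (\<forall>(k, j, w)\<in>set Y. cf m w) \<and> eqv N [(1, 0, u @ f' @ v)] Y" by (rule Cons.prems)
  qed
  have "\<exists>Z. (\<forall>(k, j, w)\<in>set Z. cf m w) \<and> eqv N (ctx u X v) Z" by (rule Cons.IH) (rule pre)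
  then obtain Z where Z: "\<forall>(k, j, w)\<in>set Z. cf m w" "eqv N (ctx u X v) Z" by (elim exE conjE)
  have "eqv N (sc k j [(1, 0, u @ f @ v)] @ ctx u X v) (sc k j Y @ Z)"
    by (intro eqv_app eqv_sc Y Z)
  then have "eqv N (ctx u (x # X) v) (sc k j Y @ Z)" by (simp add: x)
  moreover have "\<forall>(k, j, w)\<in>set (sc k j Y @ Z). cf m w"
    using Y(1) Z(1) by (auto simp: sc_def)
  ultimately show ?case by blast
qed

lemma twist_C: "\<exists>Y. (\<forall>(k, j, w)\<in>set Y. cf m w) \<and> eqv (Suc m) [(1, 0, cw (Suc m))] ((1, 0, []) # Y)"
proof (induction m)
  case 0 then show ?case by (intro exI[of _ "[]"]) (simp add: eqv_refl)
next
  case (Suc m)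
  obtain Y where Y: "\<forall>(k, j, w)\<in>set Y. cf m w" "eqv (Suc m) [(1, 0, cw (Suc m))] ((1, 0, []) # Y)"
    using Suc.IH by blast
  let ?N = "Suc (Suc m)"
  let ?g = "int (Suc m)"
  have bg: "braid_word ?N [?g]" by simp
  have e1: "eqv ?N [(1, 0, [?g] @ cw (Suc m) @ [?g])] (ctx [?g] ((1, 0, []) # Y) [?g])"
    by (rule eqv_rw[OF eqv_mono[OF Y(2)]]) auto
  have e2: "eqv ?N [(1, 0, [?g, ?g])] [(1, 0, []), (1, 1, [?g])]"
    by (rule rel_sq) auto
  have "\<exists>Z. (\<forall>(k, j, w)\<in>set Z. cf (Suc m) w) \<and> eqv ?N (ctx [?g] Y [?g]) Z"
  proof (rule lift_cf)
    fix k j f assume "(k, j, f) \<in> set Y"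
    then obtain e f' where f: "f = e @ [int m] @ f'" and ef: "braid_word m e" "braid_word m f'"
      using Y(1) unfolding cf_def by blast
    have bf: "braid_word (Suc m) f" using Y(2) \<open>(k, j, f) \<in> set Y\<close> by (auto simp: eqv_def bwc_def)
    have m1: "m \<ge> 1" using bf f by (auto simp: braid_word_def)
    have sw3: "eqv ?N [(1, 0, [] @ [?g] @ e @ [?g - 1] @ f' @ [?g])] [(1, 0, ([] @ e @ [?g - 1]) @ [?g] @ ([?g - 1] @ f'))]"
      by (rule swap3) (use m1 ef in auto)
    have "cf (Suc m) (([] @ e @ [?g - 1]) @ [?g] @ ([?g - 1] @ f'))"
    proof -
      have "braid_word (Suc m) (e @ [int m])" "braid_word (Suc m) ([int m] @ f')"
        using ef m1 bw_mono[of m _ "Suc m"] by auto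
      then show ?thesis unfolding cf_def by (intro exI[of _ "e @ [int m]"] exI[of _ "[int m] @ f'"]) simp
    qed
    then show "\<exists>Y. (\<forall>(k, j, w)\<in>set Y. cf (Suc m) w) \<and> eqv ?N [(1, 0, [?g] @ f @ [?g])] Y"
      using sw3 f by (intro exI[of _ "[(1, 0, ([] @ e @ [?g - 1]) @ [?g] @ ([?g - 1] @ f'))]"]) simp
  qed
  then obtain Z where Z: "\<forall>(k, j, w)\<in>set Z. cf (Suc m) w" "eqv ?N (ctx [?g] Y [?g]) Z" by blast
  have "eqv ?N (ctx [?g] ((1, 0, []) # Y) [?g]) ([(1, 0, []), (1, 1, [?g])] @ Z)"
    using eqv_app[OF e2 Z(2)] by simp
  with e1 have "eqv ?N [(1, 0, cw (Suc (Suc m)))] ((1, 0, []) # ((1, 1, [?g]) # Z))"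
    using eqv_trans by (simp add: cw_Suc)
  moreover have "cf (Suc m) [?g]" unfolding cf_def by (intro exI[of _ "[]"]) simp
  ultimately show ?case using Z(1) by (intro exI[of _ "(1, 1, [?g]) # Z"]) simp
qed

end



lemma sum_list_zero: "(\<forall>x\<in>set X. f x = 0) \<Longrightarrow> sum_list (map f X) = (0::'a::comm_monoid_add)"
  by (induction X) auto

lemma sum_list_scale: "(\<forall>x\<in>set X. f x = c * g x) \<Longrightarrow> sum_list (map f X) = (c::'a::comm_ring_1) * sum_list (map g X)"
  by (induction X) (auto simp: distrib_left)

context hb
begin

lemma mfw': "n \<ge> 1 \<Longrightarrow> braid_word n w \<Longrightarrow> vlow n (HH n w)"
  using mfw[of "n - 1" w] by simp

lemma U0:
  assumes n1: "n \<ge> 1" and ab: "braid_word n a" "braid_word n b"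
  shows "Poly_Mapping.lookup (HH (Suc n) (a @ [int n] @ b)) (int n, \<beta>) = 0"
  using mfw'[OF n1, of "a @ b"] ab unfolding HH_stab[OF n1 ab] lookup_vz_mult vlow_def by auto

lemma U1:
  assumes n1: "n \<ge> 1" and x: "braid_word n x"
  shows "Poly_Mapping.lookup (HH (Suc n) x) (int n, \<beta>) = - Poly_Mapping.lookup (HH n x) (int n - 1, \<beta> + 1)"
  using mfw'[OF n1 x] unfolding HH_down[OF n1 x] lookup_down vlow_def by auto

lemma L1:
  assumes n1: "n \<ge> 1" and x: "braid_word n x"
  shows "Poly_Mapping.lookup (HH (Suc n) x) (- int n, \<beta>) = Poly_Mapping.lookup (HH n x) (1 - int n, \<beta> + 1)"
  using mfw'[OF n1 x] unfolding HH_down[OF n1 x] lookup_down vlow_def by auto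

lemma L0:
  assumes n1: "n \<ge> 1" and ab: "braid_word n a" "braid_word n b"
  shows "Poly_Mapping.lookup (HH (Suc n) (a @ [int n] @ b)) (- int n, \<beta>) = Poly_Mapping.lookup (HH n (a @ b)) (1 - int n, \<beta>)"
  unfolding HH_stab[OF n1 ab] lookup_vz_mult by simp

lemma HH_eqv1:
  assumes "eqv N [(1, 0, w)] [(1, 0, w')]" "N \<le> m"
  shows "HH m w = HH m w'"
  using eqv_HH[OF assms] by (simp add: vz_00)

lemma lemA:
  assumes n1: "n \<ge> 1" and x: "braid_word n x"
  shows "Poly_Mapping.lookup (HH (Suc n) (x @ cw (Suc n))) (int n, \<beta>) = Poly_Mapping.lookup (HH (Suc n) x) (int n, \<beta>)"
proof -
  obtain m where nm: "n = Suc m" using n1 by (cases n) auto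
  obtain Y where Y: "\<forall>(k, j, w)\<in>set Y. cf m w" "eqv n [(1, 0, cw n)] ((1, 0, []) # Y)"
    using twist_C[of m] nm by blast
  have xS: "braid_word (Suc n) x" using x bw_mono by auto
  have e1: "eqv (Suc n) [(1, 0, (x @ [int n]) @ cw n @ [int n])] (ctx (x @ [int n]) ((1, 0, []) # Y) [int n])"
    by (rule eqv_rw[OF eqv_mono[OF Y(2)]]) (use xS n1 in auto)
  have H1: "HH (Suc n) (x @ cw (Suc n)) = HH (Suc n) (x @ [int n] @ [int n]) + lsum (HH (Suc n)) (ctx (x @ [int n]) Y [int n])"
    using eqv_HH[OF e1 order_refl] n1 by (simp add: cw_Suc vz_00)
  have e2: "eqv (Suc n) [(1, 0, x @ [int n, int n] @ [])] (ctx x [(1, 0, []), (1, 1, [int n])] [])"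
    by (rule eqv_rw[OF rel_sq]) (use xS n1 in auto)
  have H2: "HH (Suc n) (x @ [int n] @ [int n]) = HH (Suc n) x + vz 0 1 * HH (Suc n) (x @ [int n] @ [])"
    using eqv_HH[OF e2 order_refl] by (simp add: vz_00)
  have T1: "Poly_Mapping.lookup (HH (Suc n) (x @ [int n] @ [int n])) (int n, \<beta>) = Poly_Mapping.lookup (HH (Suc n) x) (int n, \<beta>)"
    using U0[OF n1 x bw_Nil, of "\<beta> - 1"] unfolding H2 lookup_add lookup_vz_mult by simp
  have T2: "Poly_Mapping.lookup (lsum (HH (Suc n)) (ctx (x @ [int n]) Y [int n])) (int n, \<beta>) = 0"
    unfolding lsum_ctx lookup_lsum
  proof (rule sum_list_zero, intro ballI)
    fix t assume t: "t \<in> set Y"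
    obtain k j w where tw: "t = (k, j, w)" by (cases t) auto
    obtain e f where w: "w = e @ [int m] @ f" and ef: "braid_word m e" "braid_word m f"
      using Y(1) t tw unfolding cf_def by blast
    have "braid_word n w" using Y(2) t tw by (auto simp: eqv_def bwc_def)
    then have m1: "m \<ge> 1" using w by (auto simp: braid_word_def)
    have n2: "n \<ge> 2" using m1 nm by simp
    have im: "int m = int n - 1" using nm by simp
    have ef': "braid_word (n - 1) e" "braid_word (n - 1) f" using ef nm by auto
    have "HH (Suc n) (x @ [int n] @ e @ [int n - 1] @ f @ [int n]) = HH (Suc n) ((x @ e @ [int n - 1]) @ [int n] @ ([int n - 1] @ f))"
      by (rule HH_eqv1[OF swap3[OF n2 xS ef'] order_refl])
    moreover have "Poly_Mapping.lookup (HH (Suc n) ((x @ e @ [int n - 1]) @ [int n] @ ([int n - 1] @ f))) (int n, \<beta> - j) = 0"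
      by (rule U0[OF n1]) (use x ef' n2 bw_mono[of "n - 1" _ n] in auto)
    ultimately show "(case t of (k, j, w) \<Rightarrow> k * Poly_Mapping.lookup (HH (Suc n) ((x @ [int n]) @ w @ [int n])) (int n, \<beta> - j)) = 0"
      using tw w im by simp
  qed
  show ?thesis unfolding H1 lookup_add T1 T2 by simp
qed

lemma lemB:
  assumes n1: "n \<ge> 1" and x: "braid_word n x"
  shows "Poly_Mapping.lookup (HH (Suc n) (x @ [int n] @ cw (Suc n))) (int n, \<beta>) = Poly_Mapping.lookup (HH (Suc n) x) (int n, \<beta> - 1)"
proof -
  have xS: "braid_word (Suc n) x" using x bw_mono by auto
  have bc: "braid_word n (cw n)" "braid_word (Suc n) (cw n @ [int n])" using bw_cw[of n] bw_mono[of n "cw n" "Suc n"] n1 by auto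
  have e2: "eqv (Suc n) [(1, 0, x @ [int n, int n] @ (cw n @ [int n]))] (ctx x [(1, 0, []), (1, 1, [int n])] (cw n @ [int n]))"
    by (rule eqv_rw[OF rel_sq]) (use xS n1 bc in auto)
  have H: "HH (Suc n) (x @ [int n] @ cw (Suc n)) = HH (Suc n) ((x @ cw n) @ [int n] @ []) + vz 0 1 * HH (Suc n) (x @ cw (Suc n))"
    using eqv_HH[OF e2 order_refl] n1 by (simp add: vz_00 cw_Suc)
  have "Poly_Mapping.lookup (HH (Suc n) ((x @ cw n) @ [int n] @ [])) (int n, \<beta>) = 0"
    by (rule U0[OF n1]) (use x bc in auto)
  then show ?thesis using lemA[OF n1 x, of "\<beta> - 1"] unfolding H lookup_add lookup_vz_mult by simp
qed

end



context hb
begin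

lemma PF_a:
  assumes n1: "n \<ge> 1"
    and IHM: "\<And>y \<beta>. braid_word n y \<Longrightarrow> Poly_Mapping.lookup (HH n y) (1 - int n, \<beta>)
       = (-1) ^ (n - 1) * Poly_Mapping.lookup (HH n (y @ full_twist n)) (int n - 1, \<beta>)"
    and a: "braid_word n a"
  shows "Poly_Mapping.lookup (HH (Suc n) a) (- int n, \<beta>)
       = (-1) ^ n * Poly_Mapping.lookup (HH (Suc n) (a @ full_twist (Suc n))) (int n, \<beta>)"
proof -
  let ?h = "half_twist n" and ?s = "sw (Suc n)"
  have bh: "braid_word n ?h" by (rule bw_ht)
  have bhS: "braid_word (Suc n) ?h" using bh bw_mono by auto
  have bs: "braid_word (Suc n) ?s" "braid_word (Suc n) (rev ?s)" using bw_sw[of "Suc n"] by (auto simp: braid_word_def)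
  have aS: "braid_word (Suc n) a" using a bw_mono by auto
  have ft: "full_twist (Suc n) = half_twist (Suc n) @ (?s @ ?h)" by (simp add: full_twist_def ht_Suc[of n])
  have H: "HH (Suc n) (a @ full_twist (Suc n)) = HH (Suc n) ((?h @ a @ ?h) @ cw (Suc n))"
  proof -
    have "HH (Suc n) (a @ full_twist (Suc n)) = HH (Suc n) (a @ half_twist (Suc n) @ (?s @ ?h))" by (simp only: ft)
    also have "\<dots> = HH (Suc n) (a @ (?h @ rev ?s) @ (?s @ ?h))"
      by (rule HH_eqv1[OF eqv_rw1[OF twist_D] order_refl]) (use aS bs bhS in auto)
    also have "\<dots> = HH (Suc n) ((a @ ?h @ cw (Suc n)) @ ?h)" by (simp add: cw_def)
    also have "\<dots> = HH (Suc n) (?h @ (a @ ?h @ cw (Suc n)))" by (rule HH_rot) (use aS bhS bw_cw in auto)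
    finally show ?thesis by simp
  qed
  have xb: "braid_word n (?h @ a @ ?h)" using a bh by simp
  have R: "Poly_Mapping.lookup (HH (Suc n) (a @ full_twist (Suc n))) (int n, \<beta>)
      = - Poly_Mapping.lookup (HH n (a @ full_twist n)) (int n - 1, \<beta> + 1)"
  proof -
    have "HH n (?h @ (a @ ?h)) = HH n ((a @ ?h) @ ?h)" by (rule HH_rot) (use a bh in auto)
    then show ?thesis unfolding H lemA[OF n1 xb] U1[OF n1 xb] by (simp add: full_twist_def)
  qed
  have s: "(-1::int) ^ n = (-1) * (-1) ^ (n - 1)" using n1 by (cases n) auto
  show ?thesis unfolding L1[OF n1 a] IHM[OF a] R s by simp
qed

lemma PF_agb:
  assumes n1: "n \<ge> 1"
    and IHM: "\<And>y \<beta>. braid_word n y \<Longrightarrow> Poly_Mapping.lookup (HH n y) (1 - int n, \<beta>)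
       = (-1) ^ (n - 1) * Poly_Mapping.lookup (HH n (y @ full_twist n)) (int n - 1, \<beta>)"
    and ab: "braid_word n a" "braid_word n b"
  shows "Poly_Mapping.lookup (HH (Suc n) (a @ [int n] @ b)) (- int n, \<beta>)
       = (-1) ^ n * Poly_Mapping.lookup (HH (Suc n) ((a @ [int n] @ b) @ full_twist (Suc n))) (int n, \<beta>)"
proof -
  let ?h = "half_twist n" and ?s = "sw (Suc n)"
  have bh: "braid_word n ?h" by (rule bw_ht)
  have bhS: "braid_word (Suc n) ?h" using bh bw_mono by auto
  have bs: "braid_word (Suc n) ?s" "braid_word (Suc n) (rev ?s)" using bw_sw[of "Suc n"] by (auto simp: braid_word_def)
  have aS: "braid_word (Suc n) a" "braid_word (Suc n) b" using ab bw_mono by auto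
  have gS: "braid_word (Suc n) [int n]" using n1 by simp
  have ft: "full_twist (Suc n) = half_twist (Suc n) @ (?s @ ?h)" by (simp add: full_twist_def ht_Suc[of n])
  have H: "HH (Suc n) ((a @ [int n] @ b) @ full_twist (Suc n)) = HH (Suc n) ((b @ ?h @ ?h @ a) @ [int n] @ cw (Suc n))"
  proof -
    have "HH (Suc n) ((a @ [int n] @ b) @ full_twist (Suc n)) = HH (Suc n) ((a @ [int n] @ b) @ half_twist (Suc n) @ (?s @ ?h))"
      by (simp only: ft)
    also have "\<dots> = HH (Suc n) ((a @ [int n] @ b) @ (?h @ rev ?s) @ (?s @ ?h))"
      by (rule HH_eqv1[OF eqv_rw1[OF twist_D] order_refl]) (use aS bs bhS gS in auto)
    also have "\<dots> = HH (Suc n) ((a @ [int n]) @ ((b @ ?h) @ cw (Suc n)) @ ?h)" by (simp add: cw_def)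
    also have "\<dots> = HH (Suc n) ((a @ [int n]) @ (cw (Suc n) @ (b @ ?h)) @ ?h)"
      by (rule HH_eqv1[OF eqv_rw1[OF JM_word] order_refl]) (use ab bh aS bhS gS in auto)
    also have "\<dots> = HH (Suc n) ((a @ [int n] @ cw (Suc n)) @ (b @ ?h @ ?h))" by simp
    also have "\<dots> = HH (Suc n) ((b @ ?h @ ?h) @ (a @ [int n] @ cw (Suc n)))"
      by (rule HH_rot) (use aS bhS bw_cw gS in auto)
    finally show ?thesis by simp
  qed
  have xb: "braid_word n (b @ ?h @ ?h @ a)" using ab bh by simp
  have R: "Poly_Mapping.lookup (HH (Suc n) ((a @ [int n] @ b) @ full_twist (Suc n))) (int n, \<beta>)
      = - Poly_Mapping.lookup (HH n ((a @ b) @ full_twist n)) (int n - 1, \<beta>)"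
  proof -
    have "HH n ((b @ ?h @ ?h) @ a) = HH n (a @ (b @ ?h @ ?h))" by (rule HH_rot) (use ab bh in auto)
    then show ?thesis unfolding H lemB[OF n1 xb] U1[OF n1 xb] by (simp add: full_twist_def)
  qed
  have s: "(-1::int) ^ n = (-1) * (-1) ^ (n - 1)" using n1 by (cases n) auto
  have abw: "braid_word n (a @ b)" using ab by simp
  show ?thesis unfolding L0[OF n1 ab] IHM[OF abw] R s by simp
qed

lemma mainM:
  "braid_word (Suc m) y \<Longrightarrow> Poly_Mapping.lookup (HH (Suc m) y) (1 - int (Suc m), \<beta>)
     = (-1) ^ m * Poly_Mapping.lookup (HH (Suc m) (y @ full_twist (Suc m))) (int (Suc m) - 1, \<beta>)"
proof (induction m arbitrary: y \<beta>)
  case 0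
  then have "y = []" by (cases y) auto
  moreover have "full_twist (Suc 0) = []" by (simp add: full_twist_def ht_Suc)
  ultimately show ?case by simp
next
  case (Suc m)
  define n where "n = Suc m"
  have n1: "n \<ge> 1" by (simp add: n_def)
  have IHM: "\<And>y \<beta>. braid_word n y \<Longrightarrow> Poly_Mapping.lookup (HH n y) (1 - int n, \<beta>)
       = (-1) ^ (n - 1) * Poly_Mapping.lookup (HH n (y @ full_twist n)) (int n - 1, \<beta>)"
    using Suc.IH unfolding n_def by simp
  have y: "braid_word (Suc n) y" using Suc.prems by (simp add: n_def)
  obtain X where X: "fmc n X" "eqv (Suc n) [(1, 0, y)] X" using span[OF y] by blast
  have bft: "braid_word (Suc n) (full_twist (Suc n))" by (rule bw_ft)
  have H1: "HH (Suc n) y = lsum (HH (Suc n)) X"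
    using eqv_HH[OF X(2) order_refl] by (simp add: vz_00)
  have e2: "eqv (Suc n) [(1, 0, [] @ y @ full_twist (Suc n))] (ctx [] X (full_twist (Suc n)))"
    by (rule eqv_rw[OF X(2)]) (use bft in auto)
  have H2: "HH (Suc n) (y @ full_twist (Suc n)) = lsum (\<lambda>w. HH (Suc n) (w @ full_twist (Suc n))) X"
    using eqv_HH[OF e2 order_refl] by (simp add: vz_00 lsum_ctx)
  have PF: "\<And>f \<beta>. fm n f \<Longrightarrow> Poly_Mapping.lookup (HH (Suc n) f) (- int n, \<beta>)
       = (-1) ^ n * Poly_Mapping.lookup (HH (Suc n) (f @ full_twist (Suc n))) (int n, \<beta>)"
  proof -
    fix f \<beta> assume "fm n f"
    then consider "braid_word n f" | a b where "f = a @ [int n] @ b" "braid_word n a" "braid_word n b"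
      unfolding fm_def by blast
    then show "Poly_Mapping.lookup (HH (Suc n) f) (- int n, \<beta>)
       = (-1) ^ n * Poly_Mapping.lookup (HH (Suc n) (f @ full_twist (Suc n))) (int n, \<beta>)"
    proof cases
      case 1 show ?thesis using PF_a[OF n1 IHM 1] by blast
    next
      case 2 then show ?thesis using PF_agb[OF n1 IHM 2(2,3)] by simp
    qed
  qed
  have "Poly_Mapping.lookup (HH (Suc n) y) (- int n, \<beta>)
      = (-1) ^ n * Poly_Mapping.lookup (HH (Suc n) (y @ full_twist (Suc n))) (int n, \<beta>)"
    unfolding H1 H2 lookup_lsum
  proof (rule sum_list_scale, intro ballI)
    fix t assume t: "t \<in> set X"
    obtain k j w where tw: "t = (k, j, w)" by (cases t) auto
    have "fm n w" using X(1) t tw by (auto simp: fmc_def)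
    then show "(case t of (k, j, w) \<Rightarrow> k * Poly_Mapping.lookup (HH (Suc n) w) (- int n, \<beta> - j))
        = (-1) ^ n * (case t of (k, j, w) \<Rightarrow> k * Poly_Mapping.lookup (HH (Suc n) (w @ full_twist (Suc n))) (int n, \<beta> - j))"
      using PF[of w "\<beta> - j"] tw by simp
  qed
  then show ?case by (simp add: n_def)
qed

end



lemma min_char:
  assumes "finite K" "K \<noteq> {}" "\<forall>x\<in>K. L \<le> fst x"
  shows "Min (fst ` K) = L \<longleftrightarrow> (\<exists>b. (L, b) \<in> K)"
proof
  assume "Min (fst ` K) = L"
  moreover have "Min (fst ` K) \<in> fst ` K" using assms by (intro Min_in) auto
  ultimately obtain x where "x \<in> K" "fst x = L" by auto
  then show "\<exists>b. (L, b) \<in> K" by (metis prod.collapse)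
next
  assume "\<exists>b. (L, b) \<in> K"
  then obtain b where b: "(L, b) \<in> K" by blast
  have "Min (fst ` K) \<le> L" using assms b by (intro Min_le) (auto intro: image_eqI[of _ _ "(L, b)"])
  moreover have "L \<le> Min (fst ` K)" using assms by (subst Min_ge_iff) auto
  ultimately show "Min (fst ` K) = L" by simp
qed

lemma max_char:
  assumes "finite K" "K \<noteq> {}" "\<forall>x\<in>K. fst x \<le> L"
  shows "Max (fst ` K) = L \<longleftrightarrow> (\<exists>b. (L, b) \<in> K)"
proof
  assume "Max (fst ` K) = L"
  moreover have "Max (fst ` K) \<in> fst ` K" using assms by (intro Max_in) auto
  ultimately obtain x where "x \<in> K" "fst x = L" by auto
  then show "\<exists>b. (L, b) \<in> K" by (metis prod.collapse)
next
  assume "\<exists>b. (L, b) \<in> K"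
  then obtain b where b: "(L, b) \<in> K" by blast
  have "L \<le> Max (fst ` K)" using assms b by (intro Max_ge) (auto intro: image_eqI[of _ _ "(L, b)"])
  moreover have "Max (fst ` K) \<le> L" using assms by (subst Max_le_iff) auto
  ultimately show "Max (fst ` K) = L" by simp
qed

context hb
begin

lemma P_HH: "P m w = vz (exp_sum w) 0 * HH m w"
  by (simp add: HH_def mult.assoc[symmetric] vz_mult vz_00)

lemma lookup_P: "Poly_Mapping.lookup (P m w) (d, b) = Poly_Mapping.lookup (HH m w) (d - exp_sum w, b)"
  by (simp add: P_HH lookup_vz_mult)

lemma P_nonzero: "braid_word (Suc m) w \<Longrightarrow> P (Suc m) w \<noteq> 0"
  using HH_nonzero[of m w] by (auto simp: HH_def)

end

theorem theorem1p3:
  fixes P :: "nat \<Rightarrow> int list \<Rightarrow> lpoly" and n :: nat and \<beta> :: "int list"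
  assumes "homfly_braid P"
    and "n \<ge> 1"
    and "braid_word n \<beta>"
  shows "(vdeg_min (P n \<beta>) = exp_sum \<beta> - int n + 1 \<longleftrightarrow>
           vdeg_max (P n (\<beta> @ full_twist n)) = exp_sum \<beta> + int n ^ 2 - 1)
       \<and> (vdeg_min (P n \<beta>) = exp_sum \<beta> - int n + 1 \<longrightarrow>
           vcoeff (P n \<beta>) (exp_sum \<beta> - int n + 1)
             = (\<lambda>b. (-1) ^ (n - 1) * vcoeff (P n (\<beta> @ full_twist n)) (exp_sum \<beta> + int n ^ 2 - 1) b))"
proof -
  interpret hb P by (rule hb.intro) (rule assms(1))
  obtain m where nm: "n = Suc m" using assms(2) by (cases n) auto
  let ?e = "exp_sum \<beta>" and ?F = "full_twist n"
  have bb: "braid_word (Suc m) \<beta>" using assms(3) nm by simp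
  have bF: "braid_word (Suc m) (\<beta> @ ?F)" using assms(3) bw_ft[of n] nm by simp
  have eF: "exp_sum (\<beta> @ ?F) = ?e + int n * (int n - 1)" by (simp add: es_ft)
  have M: "\<And>b. Poly_Mapping.lookup (HH n \<beta>) (1 - int n, b) = (-1) ^ (n - 1) * Poly_Mapping.lookup (HH n (\<beta> @ ?F)) (int n - 1, b)"
    using mainM[OF bb] nm by simp
  have V1: "vlow n (HH n \<beta>)" using mfw[OF bb] nm by simp
  have V2: "vlow n (HH n (\<beta> @ ?F))" using mfw[OF bF] nm by simp
  let ?K1 = "Poly_Mapping.keys (P n \<beta>)" and ?K2 = "Poly_Mapping.keys (P n (\<beta> @ ?F))"
  have K1ne: "?K1 \<noteq> {}" using P_nonzero[OF bb] nm by simp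
  have K2ne: "?K2 \<noteq> {}" using P_nonzero[OF bF] nm by simp
  have K1low: "\<forall>x\<in>?K1. ?e - int n + 1 \<le> fst x"
  proof
    fix x assume "x \<in> ?K1"
    moreover obtain d b where x: "x = (d, b)" by (cases x) auto
    ultimately have "Poly_Mapping.lookup (HH n \<beta>) (d - ?e, b) \<noteq> 0" by (simp add: in_keys_iff lookup_P)
    then show "?e - int n + 1 \<le> fst x" using V1 x unfolding vlow_def by force
  qed
  have K2up: "\<forall>x\<in>?K2. fst x \<le> ?e + int n ^ 2 - 1"
  proof
    fix x assume "x \<in> ?K2"
    moreover obtain d b where x: "x = (d, b)" by (cases x) auto
    ultimately have "Poly_Mapping.lookup (HH n (\<beta> @ ?F)) (d - exp_sum (\<beta> @ ?F), b) \<noteq> 0" by (simp add: in_keys_iff lookup_P)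
    then have "d - exp_sum (\<beta> @ ?F) \<le> int n - 1" using V2 unfolding vlow_def by force
    then show "fst x \<le> ?e + int n ^ 2 - 1" using x eF by (simp add: power2_eq_square algebra_simps)
  qed
  have I1: "vdeg_min (P n \<beta>) = ?e - int n + 1 \<longleftrightarrow> (\<exists>b. Poly_Mapping.lookup (HH n \<beta>) (1 - int n, b) \<noteq> 0)"
    unfolding vdeg_min_def min_char[OF finite_keys K1ne K1low] by (simp add: in_keys_iff lookup_P)
  have I2: "vdeg_max (P n (\<beta> @ ?F)) = ?e + int n ^ 2 - 1 \<longleftrightarrow> (\<exists>b. Poly_Mapping.lookup (HH n (\<beta> @ ?F)) (int n - 1, b) \<noteq> 0)"
  proof -
    have eq: "?e + int n ^ 2 - 1 - exp_sum (\<beta> @ ?F) = int n - 1" using eF by (simp add: power2_eq_square algebra_simps)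
    show ?thesis unfolding vdeg_max_def max_char[OF finite_keys K2ne K2up] in_keys_iff lookup_P eq ..
  qed
  have I3: "(\<exists>b. Poly_Mapping.lookup (HH n \<beta>) (1 - int n, b) \<noteq> 0) \<longleftrightarrow> (\<exists>b. Poly_Mapping.lookup (HH n (\<beta> @ ?F)) (int n - 1, b) \<noteq> 0)"
    using M by auto
  have C: "vcoeff (P n \<beta>) (?e - int n + 1) = (\<lambda>b. (-1) ^ (n - 1) * vcoeff (P n (\<beta> @ ?F)) (?e + int n ^ 2 - 1) b)"
  proof
    fix b
    have eq: "?e + int n ^ 2 - 1 - exp_sum (\<beta> @ ?F) = int n - 1" using eF by (simp add: power2_eq_square algebra_simps)
    show "vcoeff (P n \<beta>) (?e - int n + 1) b = (-1) ^ (n - 1) * vcoeff (P n (\<beta> @ ?F)) (?e + int n ^ 2 - 1) b"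
      unfolding vcoeff_def lookup_P eq using M[of b] by simp
  qed
  show ?thesis using I1 I2 I3 C by blast
qed



end
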